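(* Let $n\ge1$ and let $\Lambda$ be a normal congruence on $E_n$. Then there is $k\in\{1,\dots,n\}$ such that $\Lambda=\iota_{E_n}\cup(E_n^{(k)}\times E_n^{(k)})$.
   Context: Let $X=\{1,\dots,n\}$, $X'=\{1',\dots,n'\}$. $\mathcal{I}^{\ast}_n$ is the set of partitions of $X\cup X'$ all of whose blocks meet both $X$ and $X'$, with product: regard $\alpha$ as a partition of $X\cup X''$ and $\beta$ as a partition of $X''\cup X'$ ($X''$ a third copy of $X$), and let $\alpha\beta$ be the partition of $X\cup X'$ induced by the equivalence on $X\cup X''\cup X'$ generated by the blocks of both; it is an inverse semigroup. $E_n$ is its set of idempotents (the elements all of whose blocks have the form $E\cup E'$); rank = number of blocks; $E_n^{(k)}=\{e\in E_n:\mathrm{rank}(e)\le k\}$; $\iota_{E_n}$ is the identity relation on $E_n$. A congruence $\Lambda$ on the semilattice $E_n$ is normal if $e\Lambda f$ implies $s^{-1}es\,\Lambda\,s^{-1}fs$ for all $s\in\mathcal{I}^{\ast}_n$. *)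

theory Defs
  imports Main "HOL-Library.Disjoint_Sets"
begin

text \<open>Points of X \<union> X': Inl i stands for i, Inr i stands for i'.\<close>
type_synonym pt = "nat + nat"
type_synonym bpart = "pt set set"

definition carrierX :: "nat \<Rightarrow> pt set" where
  "carrierX n = Inl ` {1..n} \<union> Inr ` {1..n}"

definition Istar :: "nat \<Rightarrow> bpart set" where
  "Istar n = {P. partition_on (carrierX n) P \<and>
      (\<forall>B\<in>P. (\<exists>i. Inl i \<in> B) \<and> (\<exists>i. Inr i \<in> B))}"

text \<open>Three copies X, X'', X' encoded as (0,i), (1,i), (2,i).
  alpha lives on X \<union> X'' (lift1), beta on X'' \<union> X' (lift2).\<close>
fun lift1 :: "pt \<Rightarrow> nat \<times> nat" where
  "lift1 (Inl i) = (0, i)" | "lift1 (Inr i) = (1, i)"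

fun lift2 :: "pt \<Rightarrow> nat \<times> nat" where
  "lift2 (Inl i) = (1, i)" | "lift2 (Inr i) = (2, i)"

definition down :: "nat \<times> nat \<Rightarrow> pt" where
  "down x = (if fst x = 0 then Inl (snd x) else Inr (snd x))"

definition genrel :: "bpart \<Rightarrow> bpart \<Rightarrow> ((nat \<times> nat) \<times> (nat \<times> nat)) set" where
  "genrel a b = {(x, y). (\<exists>B\<in>a. x \<in> lift1 ` B \<and> y \<in> lift1 ` B) \<or>
                         (\<exists>B\<in>b. x \<in> lift2 ` B \<and> y \<in> lift2 ` B)}"

text \<open>Product: the partition of X \<union> X' induced by the equivalence on X \<union> X'' \<union> X'
  generated by the blocks of a and b.\<close>
definition pprod :: "bpart \<Rightarrow> bpart \<Rightarrow> bpart" where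
  "pprod a b = (\<lambda>x. down ` {y. (x, y) \<in> (genrel a b)\<^sup>* \<and> fst y \<noteq> 1})
      ` {x. fst x \<noteq> 1 \<and> x \<in> Field (genrel a b)}"

definition pinv :: "nat \<Rightarrow> bpart \<Rightarrow> bpart" where
  "pinv n s = (THE t. t \<in> Istar n \<and> pprod (pprod s t) s = s \<and> pprod (pprod t s) t = t)"

definition En :: "nat \<Rightarrow> bpart set" where
  "En n = {e \<in> Istar n. pprod e e = e}"

definition rank :: "bpart \<Rightarrow> nat" where
  "rank e = card e"

definition Enk :: "nat \<Rightarrow> nat \<Rightarrow> bpart set" where
  "Enk n k = {e \<in> En n. rank e \<le> k}"

definition semilattice_congruence :: "nat \<Rightarrow> (bpart \<times> bpart) set \<Rightarrow> bool" where
  "semilattice_congruence n L \<longleftrightarrow> equiv (En n) L \<and>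
     (\<forall>(e, f)\<in>L. \<forall>g\<in>En n. (pprod e g, pprod f g) \<in> L \<and> (pprod g e, pprod g f) \<in> L)"

definition normal_congruence :: "nat \<Rightarrow> (bpart \<times> bpart) set \<Rightarrow> bool" where
  "normal_congruence n L \<longleftrightarrow> semilattice_congruence n L \<and>
     (\<forall>(e, f)\<in>L. \<forall>s\<in>Istar n.
        (pprod (pprod (pinv n s) e) s, pprod (pprod (pinv n s) f) s) \<in> L)"

end

theory Submission
  imports Defs
begin


definition blk :: "'i set \<Rightarrow> ('i \<Rightarrow> nat set) \<Rightarrow> ('i \<Rightarrow> nat set) \<Rightarrow> bpart" where
  "blk I l r = (\<lambda>k. Inl ` l k \<union> Inr ` r k) ` I"

definition disjf :: "'i set \<Rightarrow> ('i \<Rightarrow> nat set) \<Rightarrow> bool" where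
  "disjf I l \<longleftrightarrow> (\<forall>i\<in>I. \<forall>j\<in>I. i \<noteq> j \<longrightarrow> l i \<inter> l j = {})"

lemma mem_Pair_image[simp]: "(x \<in> Pair k ` S) = (fst x = k \<and> snd x \<in> S)"
  by (cases x) auto

lemma lift1_img: "lift1 ` (Inl ` S \<union> Inr ` T) = Pair 0 ` S \<union> Pair 1 ` T"
  by (auto simp: image_Un image_image)

lemma lift2_img: "lift2 ` (Inl ` S \<union> Inr ` T) = Pair 1 ` S \<union> Pair 2 ` T"
  by (auto simp: image_Un image_image)

lemma genrel_blk:
  "genrel (blk I l r) (blk J l' r') = {(x,y). (\<exists>i\<in>I. x \<in> Pair 0 ` l i \<union> Pair 1 ` r i \<and> y \<in> Pair 0 ` l i \<union> Pair 1 ` r i)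
     \<or> (\<exists>j\<in>J. x \<in> Pair 1 ` l' j \<union> Pair 2 ` r' j \<and> y \<in> Pair 1 ` l' j \<union> Pair 2 ` r' j)}"
proof -
  have e1: "\<And>P. (\<exists>B\<in>(\<lambda>k. Inl ` l k \<union> Inr ` r k) ` I. P B) = (\<exists>i\<in>I. P (Inl ` l i \<union> Inr ` r i))" by blast
  have e2: "\<And>P. (\<exists>B\<in>(\<lambda>k. Inl ` l' k \<union> Inr ` r' k) ` J. P B) = (\<exists>i\<in>J. P (Inl ` l' i \<union> Inr ` r' i))" by blast
  show ?thesis unfolding genrel_def blk_def by (simp only: e1 e2 lift1_img lift2_img)
qed

lemma pprod_core:
  fixes a b :: bpart and J :: "'j set" and Z :: "'j \<Rightarrow> (nat \<times> nat) set"
  assumes R: "\<And>x y. (x,y) \<in> genrel a b \<Longrightarrow> \<exists>j\<in>J. x \<in> Z j \<and> y \<in> Z j"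
  and D: "\<And>j j'. j\<in>J \<Longrightarrow> j'\<in>J \<Longrightarrow> j\<noteq>j' \<Longrightarrow> Z j \<inter> Z j' = {}"
  and P: "\<And>j x. j\<in>J \<Longrightarrow> x\<in>Z j \<Longrightarrow> (x, c j) \<in> (genrel a b)\<^sup>*"
  and F: "\<And>j x. j\<in>J \<Longrightarrow> x\<in>Z j \<Longrightarrow> (x, x) \<in> genrel a b"
  and N: "\<And>j. j\<in>J \<Longrightarrow> \<exists>x\<in>Z j. fst x \<noteq> 1"
  shows "pprod a b = (\<lambda>j. down ` (Z j \<inter> {x. fst x \<noteq> 1})) ` J"
proof -
  let ?R = "genrel a b"
  have sym: "sym ?R" unfolding genrel_def sym_def by blast
  have symS: "sym (?R\<^sup>*)" using sym by (rule sym_rtrancl)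
  have sub: "(x,y) \<in> ?R\<^sup>* \<Longrightarrow> x = y \<or> (\<exists>j\<in>J. x \<in> Z j \<and> y \<in> Z j)" for x y
  proof (induction rule: rtrancl_induct)
    case base then show ?case by simp
  next
    case (step y z)
    from R[OF step(2)] obtain j' where j': "j'\<in>J" "y \<in> Z j'" "z \<in> Z j'" by blast
    from step(3) show ?case
    proof
      assume "x = y" with j' show ?thesis by blast
    next
      assume "\<exists>j\<in>J. x \<in> Z j \<and> y \<in> Z j"
      then obtain j where "j\<in>J" "x \<in> Z j" "y \<in> Z j" by blast
      with j' D have "j = j'" by blast
      with j' \<open>x \<in> Z j\<close> \<open>j\<in>J\<close> show ?thesis by blast
    qed
  qed
  have cls: "{y. (x,y) \<in> ?R\<^sup>*} = Z j" if "j \<in> J" "x \<in> Z j" for j x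
  proof
    show "{y. (x,y) \<in> ?R\<^sup>*} \<subseteq> Z j"
    proof
      fix y assume "y \<in> {y. (x,y) \<in> ?R\<^sup>*}"
      then have "x = y \<or> (\<exists>j\<in>J. x \<in> Z j \<and> y \<in> Z j)" using sub by blast
      then show "y \<in> Z j" using that D by blast
    qed
  next
    show "Z j \<subseteq> {y. (x,y) \<in> ?R\<^sup>*}"
    proof
      fix y assume y: "y \<in> Z j"
      have "(y, c j) \<in> ?R\<^sup>*" using P that y by blast
      then have "(c j, y) \<in> ?R\<^sup>*" using symS by (meson symD)
      moreover have "(x, c j) \<in> ?R\<^sup>*" using P that by blast
      ultimately show "y \<in> {y. (x,y) \<in> ?R\<^sup>*}" by simp
    qed
  qed
  have fld: "x \<in> Field ?R \<Longrightarrow> \<exists>j\<in>J. x \<in> Z j" for x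
    unfolding Field_def using R by blast
  show ?thesis unfolding pprod_def
  proof (rule set_eqI, rule iffI)
    fix W assume "W \<in> (\<lambda>x. down ` {y. (x, y) \<in> ?R\<^sup>* \<and> fst y \<noteq> 1}) ` {x. fst x \<noteq> 1 \<and> x \<in> Field ?R}"
    then obtain x where x: "fst x \<noteq> 1" "x \<in> Field ?R" and W: "W = down ` {y. (x, y) \<in> ?R\<^sup>* \<and> fst y \<noteq> 1}" by blast
    from fld[OF x(2)] obtain j where j: "j\<in>J" "x \<in> Z j" by blast
    have "{y. (x, y) \<in> ?R\<^sup>* \<and> fst y \<noteq> 1} = Z j \<inter> {x. fst x \<noteq> 1}" using cls[OF j] by blast
    with W j show "W \<in> (\<lambda>j. down ` (Z j \<inter> {x. fst x \<noteq> 1})) ` J" by auto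
  next
    fix W assume "W \<in> (\<lambda>j. down ` (Z j \<inter> {x. fst x \<noteq> 1})) ` J"
    then obtain j where j: "j \<in> J" and W: "W = down ` (Z j \<inter> {x. fst x \<noteq> 1})" by blast
    from N[OF j] obtain x where x: "x \<in> Z j" "fst x \<noteq> 1" by blast
    have xf: "x \<in> Field ?R" using F[OF j x(1)] unfolding Field_def by blast
    have "{y. (x, y) \<in> ?R\<^sup>* \<and> fst y \<noteq> 1} = Z j \<inter> {x. fst x \<noteq> 1}" using cls[OF j x(1)] by blast
    then have "W = down ` {y. (x, y) \<in> ?R\<^sup>* \<and> fst y \<noteq> 1}" using W by simp
    with x xf show "W \<in> (\<lambda>x. down ` {y. (x, y) \<in> ?R\<^sup>* \<and> fst y \<noteq> 1}) ` {x. fst x \<noteq> 1 \<and> x \<in> Field ?R}" by blast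
  qed
qed

lemma in_genrel_blk:
  "(x,y) \<in> genrel (blk I l r) (blk J l' r') \<longleftrightarrow> (\<exists>i\<in>I. x \<in> Pair 0 ` l i \<union> Pair 1 ` r i \<and> y \<in> Pair 0 ` l i \<union> Pair 1 ` r i)
     \<or> (\<exists>j\<in>J. x \<in> Pair 1 ` l' j \<union> Pair 2 ` r' j \<and> y \<in> Pair 1 ` l' j \<union> Pair 2 ` r' j)"
  by (subst genrel_blk) simp

lemma down_layers:
  "down ` ((Pair (0::nat) ` S \<union> Pair (1::nat) ` M \<union> Pair (2::nat) ` T) \<inter> {x. fst x \<noteq> 1}) = Inl ` S \<union> Inr ` T"
proof -
  have "(Pair (0::nat) ` S \<union> Pair (1::nat) ` M \<union> Pair (2::nat) ` T) \<inter> {x. fst x \<noteq> 1} = Pair 0 ` S \<union> Pair 2 ` T" by auto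
  moreover have "down ` (Pair (0::nat) ` S \<union> Pair (2::nat) ` T) = Inl ` S \<union> Inr ` T"
    by (simp only: image_Un image_image down_def) simp
  ultimately show ?thesis by simp
qed

lemma pprod_gen1:
  assumes dl: "disjf I l" and nr: "\<And>i. i\<in>I \<Longrightarrow> r i \<noteq> {}"
  and dl': "disjf J l'" and dr': "disjf J r'" and nl': "\<And>j. j\<in>J \<Longrightarrow> l' j \<noteq> {}"
  and nr': "\<And>j. j \<in> J \<Longrightarrow> r' j \<noteq> {}"
  and ref: "\<And>i. i\<in>I \<Longrightarrow> \<exists>j\<in>J. r i \<subseteq> l' j"
  shows "pprod (blk I l r) (blk J l' r') = blk J (\<lambda>j. \<Union>{l i | i. i\<in>I \<and> r i \<subseteq> l' j}) r'"
proof -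
  define U where "U j = \<Union>{l i | i. i\<in>I \<and> r i \<subseteq> l' j}" for j
  define Z where "Z j = Pair (0::nat) ` U j \<union> Pair 1 ` l' j \<union> Pair 2 ` r' j" for j
  define c where "c j = (1::nat, SOME g. g \<in> l' j)" for j
  let ?R = "genrel (blk I l r) (blk J l' r')"
  have cZ: "c j \<in> Pair 1 ` l' j" if "j \<in> J" for j
    using nl'[OF that] some_in_eq unfolding c_def by auto
  have "pprod (blk I l r) (blk J l' r') = (\<lambda>j. down ` (Z j \<inter> {x. fst x \<noteq> 1})) ` J"
  proof (rule pprod_core)
    fix x y assume "(x,y) \<in> ?R"
    then show "\<exists>j\<in>J. x \<in> Z j \<and> y \<in> Z j"
      unfolding in_genrel_blk
    proof (elim disjE bexE)
      fix i assume i: "i \<in> I" and xy: "x \<in> Pair 0 ` l i \<union> Pair 1 ` r i \<and> y \<in> Pair 0 ` l i \<union> Pair 1 ` r i"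
      from ref[OF i] obtain j where j: "j \<in> J" "r i \<subseteq> l' j" by blast
      have "l i \<subseteq> U j" unfolding U_def using i j by blast
      then have "Pair 0 ` l i \<union> Pair 1 ` r i \<subseteq> Z j" unfolding Z_def using j by blast
      with xy j show ?thesis by blast
    next
      fix j assume j: "j \<in> J" and xy: "x \<in> Pair 1 ` l' j \<union> Pair 2 ` r' j \<and> y \<in> Pair 1 ` l' j \<union> Pair 2 ` r' j"
      then show ?thesis unfolding Z_def by blast
    qed
  next
    fix j j' assume j: "j\<in>J" "j'\<in>J" "j\<noteq>j'"
    show "Z j \<inter> Z j' = {}"
    proof (rule ccontr)
      assume "Z j \<inter> Z j' \<noteq> {}"
      then obtain x where x: "x \<in> Z j" "x \<in> Z j'" by blast
      have l'd: "l' j \<inter> l' j' = {}" using dl' j unfolding disjf_def by blast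
      have r'd: "r' j \<inter> r' j' = {}" using dr' j unfolding disjf_def by blast
      consider "fst x = 0" | "fst x = 1" | "fst x = 2" | "fst x \<noteq> 0 \<and> fst x \<noteq> 1 \<and> fst x \<noteq> 2" by blast
      then show False
      proof cases
        case 1
        with x obtain i1 i2 where "i1 \<in> I" "r i1 \<subseteq> l' j" "snd x \<in> l i1" "i2 \<in> I" "r i2 \<subseteq> l' j'" "snd x \<in> l i2"
          unfolding Z_def U_def by auto
        then show False using dl nr l'd unfolding disjf_def by (cases "i1 = i2") blast+
      next
        case 2 with x l'd show False unfolding Z_def by auto
      next
        case 3 with x r'd show False unfolding Z_def by auto
      next
        case 4 with x show False unfolding Z_def by auto
      qed
    qed
  next
    fix j x assume j: "j \<in> J" and x: "x \<in> Z j"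
    have cj: "c j \<in> Pair 1 ` l' j" using cZ j .
    show "(x, c j) \<in> ?R\<^sup>*"
    proof (cases "fst x = 0")
      case True
      with x obtain i where i: "i \<in> I" "r i \<subseteq> l' j" "snd x \<in> l i" unfolding Z_def U_def by auto
      from nr[OF i(1)] obtain z where z: "z \<in> r i" by blast
      have "(x, (1,z)) \<in> ?R" unfolding in_genrel_blk using i z True by auto
      moreover have "((1,z), c j) \<in> ?R" unfolding in_genrel_blk using i z j cj by auto
      ultimately show ?thesis by (meson converse_rtrancl_into_rtrancl r_into_rtrancl)
    next
      case False
      then have "x \<in> Pair 1 ` l' j \<union> Pair 2 ` r' j" using x unfolding Z_def by auto
      then have "(x, c j) \<in> ?R" unfolding in_genrel_blk using j cj by blast
      then show ?thesis by blast
    qed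
  next
    fix j x assume j: "j \<in> J" and x: "x \<in> Z j"
    show "(x, x) \<in> ?R"
    proof (cases "fst x = 0")
      case True
      with x obtain i where i: "i \<in> I" "r i \<subseteq> l' j" "snd x \<in> l i" unfolding Z_def U_def by auto
      then show ?thesis unfolding in_genrel_blk using True by auto
    next
      case False
      then have "x \<in> Pair 1 ` l' j \<union> Pair 2 ` r' j" using x unfolding Z_def by auto
      then show ?thesis unfolding in_genrel_blk using j by blast
    qed
  next
    fix j assume j: "j \<in> J"
    from nr'[OF j] obtain y where "y \<in> r' j" by blast
    then show "\<exists>x\<in>Z j. fst x \<noteq> 1" unfolding Z_def by (intro bexI[of _ "(2,y)"]) auto
  qed
  also have "\<dots> = blk J U r'"
    unfolding blk_def Z_def down_layers ..
  finally show ?thesis unfolding U_def .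
qed

lemma pprod_gen2:
  assumes dl: "disjf I l" and dr: "disjf I r" and nl: "\<And>i. i\<in>I \<Longrightarrow> l i \<noteq> {}"
  and nr: "\<And>i. i\<in>I \<Longrightarrow> r i \<noteq> {}"
  and dr': "disjf J r'" and nl': "\<And>j. j\<in>J \<Longrightarrow> l' j \<noteq> {}"
  and ref: "\<And>j. j\<in>J \<Longrightarrow> \<exists>i\<in>I. l' j \<subseteq> r i"
  shows "pprod (blk I l r) (blk J l' r') = blk I l (\<lambda>i. \<Union>{r' j | j. j\<in>J \<and> l' j \<subseteq> r i})"
proof -
  define V where "V i = \<Union>{r' j | j. j\<in>J \<and> l' j \<subseteq> r i}" for i
  define Z where "Z i = Pair (0::nat) ` l i \<union> Pair 1 ` r i \<union> Pair 2 ` V i" for i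
  define c where "c i = (1::nat, SOME g. g \<in> r i)" for i
  let ?R = "genrel (blk I l r) (blk J l' r')"
  have cZ: "c i \<in> Pair 1 ` r i" if "i \<in> I" for i
    using nr[OF that] some_in_eq unfolding c_def by auto
  have "pprod (blk I l r) (blk J l' r') = (\<lambda>i. down ` (Z i \<inter> {x. fst x \<noteq> 1})) ` I"
  proof (rule pprod_core)
    fix x y assume "(x,y) \<in> ?R"
    then show "\<exists>i\<in>I. x \<in> Z i \<and> y \<in> Z i"
      unfolding in_genrel_blk
    proof (elim disjE bexE)
      fix i assume i: "i \<in> I" and xy: "x \<in> Pair 0 ` l i \<union> Pair 1 ` r i \<and> y \<in> Pair 0 ` l i \<union> Pair 1 ` r i"
      then show ?thesis unfolding Z_def by blast
    next
      fix j assume j: "j \<in> J" and xy: "x \<in> Pair 1 ` l' j \<union> Pair 2 ` r' j \<and> y \<in> Pair 1 ` l' j \<union> Pair 2 ` r' j"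
      from ref[OF j] obtain i where i: "i \<in> I" "l' j \<subseteq> r i" by blast
      have "r' j \<subseteq> V i" unfolding V_def using i j by blast
      then have "Pair 1 ` l' j \<union> Pair 2 ` r' j \<subseteq> Z i" unfolding Z_def using i by blast
      with xy i show ?thesis by blast
    qed
  next
    fix i i' assume i: "i\<in>I" "i'\<in>I" "i\<noteq>i'"
    show "Z i \<inter> Z i' = {}"
    proof (rule ccontr)
      assume "Z i \<inter> Z i' \<noteq> {}"
      then obtain x where x: "x \<in> Z i" "x \<in> Z i'" by blast
      have ld: "l i \<inter> l i' = {}" using dl i unfolding disjf_def by blast
      have rd: "r i \<inter> r i' = {}" using dr i unfolding disjf_def by blast
      consider "fst x = 0" | "fst x = 1" | "fst x = 2" | "fst x \<noteq> 0 \<and> fst x \<noteq> 1 \<and> fst x \<noteq> 2" by blast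
      then show False
      proof cases
        case 3
        with x obtain j1 j2 where "j1 \<in> J" "l' j1 \<subseteq> r i" "snd x \<in> r' j1" "j2 \<in> J" "l' j2 \<subseteq> r i'" "snd x \<in> r' j2"
          unfolding Z_def V_def by auto
        then show False using dr' nl' rd unfolding disjf_def by (cases "j1 = j2") blast+
      next
        case 2 with x rd show False unfolding Z_def by auto
      next
        case 1 with x ld show False unfolding Z_def by auto
      next
        case 4 with x show False unfolding Z_def by auto
      qed
    qed
  next
    fix i x assume i: "i \<in> I" and x: "x \<in> Z i"
    have ci: "c i \<in> Pair 1 ` r i" using cZ i .
    show "(x, c i) \<in> ?R\<^sup>*"
    proof (cases "fst x = 2")
      case True
      with x obtain j where j: "j \<in> J" "l' j \<subseteq> r i" "snd x \<in> r' j" unfolding Z_def V_def by auto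
      from nl'[OF j(1)] obtain z where z: "z \<in> l' j" by blast
      have "(x, (1,z)) \<in> ?R" unfolding in_genrel_blk using j z True by auto
      moreover have "((1,z), c i) \<in> ?R" unfolding in_genrel_blk using i z j ci by auto
      ultimately show ?thesis by (meson converse_rtrancl_into_rtrancl r_into_rtrancl)
    next
      case False
      then have "x \<in> Pair 0 ` l i \<union> Pair 1 ` r i" using x unfolding Z_def by auto
      then have "(x, c i) \<in> ?R" unfolding in_genrel_blk using i ci by blast
      then show ?thesis by blast
    qed
  next
    fix i x assume i: "i \<in> I" and x: "x \<in> Z i"
    show "(x, x) \<in> ?R"
    proof (cases "fst x = 2")
      case True
      with x obtain j where j: "j \<in> J" "l' j \<subseteq> r i" "snd x \<in> r' j" unfolding Z_def V_def by auto
      then show ?thesis unfolding in_genrel_blk using True by auto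
    next
      case False
      then have "x \<in> Pair 0 ` l i \<union> Pair 1 ` r i" using x unfolding Z_def by auto
      then show ?thesis unfolding in_genrel_blk using i by blast
    qed
  next
    fix i assume i: "i \<in> I"
    from nl[OF i] obtain y where "y \<in> l i" by blast
    then show "\<exists>x\<in>Z i. fst x \<noteq> 1" unfolding Z_def by (intro bexI[of _ "(0,y)"]) auto
  qed
  also have "\<dots> = blk I l V"
    unfolding blk_def Z_def down_layers ..
  finally show ?thesis unfolding V_def .
qed

lemma part_disjf:
  assumes "partition_on S (l ` I)" "inj_on l I" shows "disjf I l"
  unfolding disjf_def
proof (intro ballI impI)
  fix i j assume "i \<in> I" "j \<in> I" "i \<noteq> j"
  then have "l i \<noteq> l j" using assms(2) by (meson inj_onD)
  moreover have "l i \<in> l ` I" "l j \<in> l ` I" using \<open>i \<in> I\<close> \<open>j \<in> I\<close> by auto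
  ultimately show "l i \<inter> l j = {}" using disjointD[OF partition_onD2[OF assms(1)]] by blast
qed

lemma part_ne: "partition_on S (l ` I) \<Longrightarrow> i \<in> I \<Longrightarrow> l i \<noteq> {}"
  using partition_onD3 by fastforce

lemma part_disjf_id: "partition_on S A \<Longrightarrow> disjf A (\<lambda>x. x)"
  unfolding disjf_def using partition_onD2 by (metis disjointD)

lemma part_ne_id: "partition_on S A \<Longrightarrow> i \<in> A \<Longrightarrow> i \<noteq> {}"
  using partition_onD3 by fastforce

lemma blk_cong: "(\<And>i. i \<in> I \<Longrightarrow> l i = l2 i) \<Longrightarrow> (\<And>i. i \<in> I \<Longrightarrow> r i = r2 i) \<Longrightarrow> blk I l r = blk I l2 r2"
  unfolding blk_def by auto

lemma sel_unique:
  assumes "disjf I f" "\<And>i. i \<in> I \<Longrightarrow> f i \<noteq> {}" "j \<in> I"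
  shows "\<Union>{g i | i. i\<in>I \<and> f i \<subseteq> f j} = g j"
proof -
  have "{i. i\<in>I \<and> f i \<subseteq> f j} = {j}"
  proof (intro set_eqI iffI)
    fix i assume "i \<in> {i. i\<in>I \<and> f i \<subseteq> f j}"
    then have "i \<in> I" "f i \<subseteq> f j" by auto
    then show "i \<in> {j}" using assms unfolding disjf_def by blast
  next
    fix i assume "i \<in> {j}"
    then show "i \<in> {i. i\<in>I \<and> f i \<subseteq> f j}" using assms(3) by simp
  qed
  moreover have "{g i | i. i\<in>I \<and> f i \<subseteq> f j} = g ` {i. i\<in>I \<and> f i \<subseteq> f j}" by auto
  ultimately show ?thesis by simp
qed

lemma blk_Istar:
  assumes "partition_on {1..n} (l ` I)" "partition_on {1..n} (r ` I)" "inj_on l I" "inj_on r I"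
  shows "blk I l r \<in> Istar n"
proof -
  have dl: "disjf I l" and dr: "disjf I r" using assms part_disjf by blast+
  have U: "\<Union>(blk I l r) = carrierX n"
  proof -
    have "\<Union>(blk I l r) = Inl ` \<Union>(l ` I) \<union> Inr ` \<Union>(r ` I)" unfolding blk_def by auto
    also have "\<dots> = carrierX n" using partition_onD1[OF assms(1)] partition_onD1[OF assms(2)]
      unfolding carrierX_def by simp
    finally show ?thesis .
  qed
  have P: "partition_on (carrierX n) (blk I l r)"
  proof (rule partition_onI)
    show "\<Union>(blk I l r) = carrierX n" by (rule U)
  next
    fix p q assume "p \<in> blk I l r" "q \<in> blk I l r" "p \<noteq> q"
    then obtain i j where ij: "i \<in> I" "j \<in> I" "p = Inl ` l i \<union> Inr ` r i" "q = Inl ` l j \<union> Inr ` r j"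
      unfolding blk_def by auto
    have "i \<noteq> j" using ij \<open>p \<noteq> q\<close> by blast
    then have "l i \<inter> l j = {}" "r i \<inter> r j = {}" using dl dr ij(1,2) unfolding disjf_def by auto
    then show "disjnt p q" unfolding disjnt_def ij(3,4) by auto
  next
    show "{} \<notin> blk I l r" unfolding blk_def using part_ne[OF assms(1)] by auto
  qed
  have "\<forall>B\<in>blk I l r. (\<exists>i. Inl i \<in> B) \<and> (\<exists>i. Inr i \<in> B)"
  proof
    fix B assume "B \<in> blk I l r"
    then obtain i where i: "i \<in> I" "B = Inl ` l i \<union> Inr ` r i" unfolding blk_def by auto
    from part_ne[OF assms(1) i(1)] obtain x where "x \<in> l i" by blast
    moreover from part_ne[OF assms(2) i(1)] obtain y where "y \<in> r i" by blast
    ultimately show "(\<exists>i. Inl i \<in> B) \<and> (\<exists>i. Inr i \<in> B)" using i by blast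
  qed
  with P show ?thesis unfolding Istar_def by blast
qed

lemma gr1: "B \<in> a \<Longrightarrow> p \<in> B \<Longrightarrow> q \<in> B \<Longrightarrow> (lift1 p, lift1 q) \<in> genrel a b"
  unfolding genrel_def by (simp only: mem_Collect_eq case_prod_conv) (intro disjI1 bexI[of _ B], auto)

lemma gr2: "B \<in> b \<Longrightarrow> p \<in> B \<Longrightarrow> q \<in> B \<Longrightarrow> (lift2 p, lift2 q) \<in> genrel a b"
  unfolding genrel_def by (simp only: mem_Collect_eq case_prod_conv) (intro disjI2 bexI[of _ B], auto)

lemma pprod_easy:
  assumes "(x,y) \<in> (genrel a b)\<^sup>*" "fst x \<noteq> 1" "fst y \<noteq> 1" "(x,x) \<in> genrel a b"
  shows "\<exists>W\<in>pprod a b. down x \<in> W \<and> down y \<in> W"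
proof -
  have xf: "x \<in> Field (genrel a b)" using assms(4) by (rule FieldI1)
  have "down ` {y. (x, y) \<in> (genrel a b)\<^sup>* \<and> fst y \<noteq> 1} \<in> pprod a b"
    unfolding pprod_def by (rule imageI) (use assms(2) xf in simp)
  moreover have "down x \<in> down ` {y. (x, y) \<in> (genrel a b)\<^sup>* \<and> fst y \<noteq> 1}" by (rule imageI) (use assms(2) in simp)
  moreover have "down y \<in> down ` {y. (x, y) \<in> (genrel a b)\<^sup>* \<and> fst y \<noteq> 1}" by (rule imageI) (use assms(1,3) in simp)
  ultimately show ?thesis by (intro bexI conjI)
qed

lemma Istar_part: "t \<in> Istar n \<Longrightarrow> partition_on (carrierX n) t"
  unfolding Istar_def by blast

lemma part_same: "partition_on S P \<Longrightarrow> W1 \<in> P \<Longrightarrow> W2 \<in> P \<Longrightarrow> p \<in> W1 \<Longrightarrow> p \<in> W2 \<Longrightarrow> W1 = W2"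
  using partition_onD2[of S P] disjointD[of P W1 W2] by blast

lemma part_cover: "partition_on S P \<Longrightarrow> p \<in> S \<Longrightarrow> \<exists>W\<in>P. p \<in> W"
  using partition_onD1 by blast

lemma part_sub: "partition_on S P \<Longrightarrow> W \<in> P \<Longrightarrow> W \<subseteq> S"
  using partition_onD1 by blast

lemma carrier_Inl: "Inl i \<in> carrierX n \<longleftrightarrow> i \<in> {1..n}"
  unfolding carrierX_def by auto
lemma carrier_Inr: "Inr i \<in> carrierX n \<longleftrightarrow> i \<in> {1..n}"
  unfolding carrierX_def by auto

lemma Istar_Inl: "t \<in> Istar n \<Longrightarrow> T \<in> t \<Longrightarrow> \<exists>i. Inl i \<in> T"
  unfolding Istar_def by blast
lemma Istar_Inr: "t \<in> Istar n \<Longrightarrow> T \<in> t \<Longrightarrow> \<exists>i. Inr i \<in> T"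
  unfolding Istar_def by blast




lemma inj_disjf: "disjf I f \<Longrightarrow> (\<And>i. i \<in> I \<Longrightarrow> f i \<noteq> {}) \<Longrightarrow> inj_on f I"
  unfolding disjf_def inj_on_def by (metis Int_absorb)

lemma st_prod:
  assumes d1: "disjf A f" "\<And>i. i \<in> A \<Longrightarrow> f i \<noteq> {}"
  and d2: "disjf A g" "\<And>i. i \<in> A \<Longrightarrow> g i \<noteq> {}"
  and d3: "disjf A h" "\<And>i. i \<in> A \<Longrightarrow> h i \<noteq> {}"
  shows "pprod (blk A f g) (blk A g h) = blk A f h"
proof -
  have "pprod (blk A f g) (blk A g h) = blk A (\<lambda>j. \<Union>{f i | i. i\<in>A \<and> g i \<subseteq> g j}) h"
    by (rule pprod_gen1) (use assms in auto)
  also have "\<dots> = blk A f h"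
    by (rule blk_cong) (use sel_unique[OF d2, of _ f] in auto)
  finally show ?thesis .
qed

lemma two_step: "(a,b) \<in> R \<Longrightarrow> (b,c) \<in> R \<Longrightarrow> (a,c) \<in> R\<^sup>*"
  by (meson converse_rtrancl_into_rtrancl r_into_rtrancl)

lemma down0[simp]: "down (0, i) = Inl i" and down2[simp]: "down (2, i) = Inr i"
  unfolding down_def by auto

lemma easy3:
  assumes "((0,a),(1,b)) \<in> genrel x y" "((1,b),(2,c)) \<in> genrel x y" "((0,a),(0,a)) \<in> genrel x y"
  shows "\<exists>W\<in>pprod x y. Inl a \<in> W \<and> Inr c \<in> W"
  using pprod_easy[of "(0,a)" "(2,c)" x y] two_step[OF assms(1,2)] assms(3) by simp

lemma pinv_unique:
  assumes A: "partition_on {1..n} A" and B: "partition_on {1..n} (\<phi> ` A)" and inj: "inj_on \<phi> A"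
  and t: "t \<in> Istar n"
  and e1: "pprod (pprod (blk A (\<lambda>x. x) \<phi>) t) (blk A (\<lambda>x. x) \<phi>) = blk A (\<lambda>x. x) \<phi>"
  and e2: "pprod (pprod t (blk A (\<lambda>x. x) \<phi>)) t = t"
  shows "t = blk A \<phi> (\<lambda>x. x)"
proof -
  let ?s = "blk A (\<lambda>x. x) \<phi>"
  have dA: "disjf A (\<lambda>x. x)" using A by (rule part_disjf_id)
  have dP: "disjf A \<phi>" using B inj by (rule part_disjf)
  have nA: "\<And>E. E \<in> A \<Longrightarrow> E \<noteq> {}" using part_ne_id[OF A] by blast
  have nP: "\<And>E. E \<in> A \<Longrightarrow> \<phi> E \<noteq> {}" using part_ne[OF B] by blast
  have SE: "\<And>E. E \<in> A \<Longrightarrow> Inl ` E \<union> Inr ` \<phi> E \<in> ?s" unfolding blk_def by (rule imageI)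
  have sE: "\<And>W. W \<in> ?s \<Longrightarrow> \<exists>E\<in>A. W = Inl ` E \<union> Inr ` \<phi> E" unfolding blk_def by (simp only: image_iff)
  have tp: "partition_on (carrierX n) t" using t by (rule Istar_part)
  have inT: "\<And>T p. T \<in> t \<Longrightarrow> p \<in> T \<Longrightarrow> p \<in> carrierX n" using part_sub[OF tp] by blast
  have UA: "\<Union>A = {1..n}" using partition_onD1[OF A] by simp
  have UP: "\<Union>(\<phi> ` A) = {1..n}" using partition_onD1[OF B] by simp
  have coverA: "\<And>j. j \<in> {1..n} \<Longrightarrow> \<exists>E\<in>A. j \<in> E" using UA by blast
  have coverP: "\<And>j. j \<in> {1..n} \<Longrightarrow> \<exists>E\<in>A. j \<in> \<phi> E" using UP by blast
  have subP: "\<And>E. E \<in> A \<Longrightarrow> \<phi> E \<subseteq> {1..n}" using UP by blast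
  have subA: "\<And>E. E \<in> A \<Longrightarrow> E \<subseteq> {1..n}" using UA by blast
  have uA: "\<And>E E' x. E \<in> A \<Longrightarrow> E' \<in> A \<Longrightarrow> x \<in> E \<Longrightarrow> x \<in> E' \<Longrightarrow> E = E'"
    using dA unfolding disjf_def by blast
  have uP: "\<And>E E' x. E \<in> A \<Longrightarrow> E' \<in> A \<Longrightarrow> x \<in> \<phi> E \<Longrightarrow> x \<in> \<phi> E' \<Longrightarrow> E = E'"
    using dP unfolding disjf_def by blast
  have tsame: "\<And>W1 W2 p. W1 \<in> t \<Longrightarrow> W2 \<in> t \<Longrightarrow> p \<in> W1 \<Longrightarrow> p \<in> W2 \<Longrightarrow> W1 = W2"
    by (rule part_same[OF tp])
  have c1: "j \<in> E" if T: "T \<in> t" and i: "Inl i \<in> T" and E: "E \<in> A" "i \<in> \<phi> E" and j: "Inr j \<in> T" for T i j E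
  proof -
    obtain e0 where e0: "e0 \<in> E" using nA[OF E(1)] by blast
    have "\<exists>V\<in>pprod ?s t. Inl e0 \<in> V \<and> Inr j \<in> V"
    proof (rule easy3)
      show "((0, e0), 1, i) \<in> genrel ?s t" using gr1[OF SE[OF E(1)], of "Inl e0" "Inr i"] e0 E by simp
      show "((1, i), 2, j) \<in> genrel ?s t" using gr2[OF T, of "Inl i" "Inr j"] i j by simp
      show "((0, e0), 0, e0) \<in> genrel ?s t" using gr1[OF SE[OF E(1)], of "Inl e0" "Inl e0"] e0 by simp
    qed
    then obtain V where V: "V \<in> pprod ?s t" "Inl e0 \<in> V" "Inr j \<in> V" by blast
    have "j \<in> {1..n}" using inT[OF T j] carrier_Inr by blast
    then obtain E' where E': "E' \<in> A" "j \<in> E'" using coverA by blast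
    obtain x where x: "x \<in> \<phi> E'" using nP[OF E'(1)] by blast
    have "\<exists>W\<in>pprod (pprod ?s t) ?s. Inl e0 \<in> W \<and> Inr x \<in> W"
    proof (rule easy3)
      show "((0, e0), 1, j) \<in> genrel (pprod ?s t) ?s" using gr1[OF V(1), of "Inl e0" "Inr j"] V by simp
      show "((1, j), 2, x) \<in> genrel (pprod ?s t) ?s" using gr2[OF SE[OF E'(1)], of "Inl j" "Inr x"] E' x by simp
      show "((0, e0), 0, e0) \<in> genrel (pprod ?s t) ?s" using gr1[OF V(1), of "Inl e0" "Inl e0"] V by simp
    qed
    then obtain W where W: "W \<in> ?s" "Inl e0 \<in> W" "Inr x \<in> W" using e1 by auto
    from sE[OF W(1)] obtain E'' where E'': "E'' \<in> A" "W = Inl ` E'' \<union> Inr ` \<phi> E''" by blast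
    have "e0 \<in> E''" using W(2) E'' by auto
    then have "E'' = E" using uA E'' E e0 by blast
    moreover have "x \<in> \<phi> E''" using W(3) E'' by auto
    ultimately have "E' = E" using uP E' E x by blast
    then show ?thesis using E' by simp
  qed
  have c3: "Inl x \<in> T" if T: "T \<in> t" and i: "Inl i \<in> T" and E: "E \<in> A" "i \<in> \<phi> E" and x: "x \<in> \<phi> E" for T i E x
  proof -
    obtain j where j: "Inr j \<in> T" using Istar_Inr[OF t T] by blast
    have jE: "j \<in> E" using c1[OF T i E j] .
    have "\<exists>V\<in>pprod t ?s. Inl i \<in> V \<and> Inr x \<in> V"
    proof (rule easy3)
      show "((0, i), 1, j) \<in> genrel t ?s" using gr1[OF T, of "Inl i" "Inr j"] i j by simp
      show "((1, j), 2, x) \<in> genrel t ?s" using gr2[OF SE[OF E(1)], of "Inl j" "Inr x"] jE x by simp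
      show "((0, i), 0, i) \<in> genrel t ?s" using gr1[OF T, of "Inl i" "Inl i"] i by simp
    qed
    then obtain V where V: "V \<in> pprod t ?s" "Inl i \<in> V" "Inr x \<in> V" by blast
    have "Inl x \<in> carrierX n" using subP[OF E(1)] x carrier_Inl by blast
    then obtain T2 where T2: "T2 \<in> t" "Inl x \<in> T2" using part_cover[OF tp] by blast
    obtain y where y: "Inr y \<in> T2" using Istar_Inr[OF t T2(1)] by blast
    have "\<exists>W\<in>pprod (pprod t ?s) t. Inl i \<in> W \<and> Inr y \<in> W"
    proof (rule easy3)
      show "((0, i), 1, x) \<in> genrel (pprod t ?s) t" using gr1[OF V(1), of "Inl i" "Inr x"] V by simp
      show "((1, x), 2, y) \<in> genrel (pprod t ?s) t" using gr2[OF T2(1), of "Inl x" "Inr y"] T2 y by simp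
      show "((0, i), 0, i) \<in> genrel (pprod t ?s) t" using gr1[OF V(1), of "Inl i" "Inl i"] V by simp
    qed
    then obtain W where W: "W \<in> t" "Inl i \<in> W" "Inr y \<in> W" using e2 by auto
    have "W = T" using tsame W T i by blast
    moreover have "W = T2" using tsame W T2 y by blast
    ultimately show ?thesis using T2 by simp
  qed
  have c4: "Inr x \<in> T" if T: "T \<in> t" and j: "Inr j \<in> T" and E: "E \<in> A" "j \<in> E" and x: "x \<in> E" for T j E x
  proof -
    obtain i where i: "Inl i \<in> T" using Istar_Inl[OF t T] by blast
    have "i \<in> {1..n}" using inT[OF T i] carrier_Inl by blast
    then obtain E1 where E1: "E1 \<in> A" "i \<in> \<phi> E1" using coverP by blast
    have "j \<in> E1" using c1[OF T i E1 j] .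
    then have "E1 = E" using uA E1 E by blast
    then have iE: "i \<in> \<phi> E" using E1 by simp
    have "Inr x \<in> carrierX n" using subA[OF E(1)] x carrier_Inr by blast
    then obtain T3 where T3: "T3 \<in> t" "Inr x \<in> T3" using part_cover[OF tp] by blast
    obtain l where l: "Inl l \<in> T3" using Istar_Inl[OF t T3(1)] by blast
    have "\<exists>V\<in>pprod t ?s. Inl l \<in> V \<and> Inr i \<in> V"
    proof (rule easy3)
      show "((0, l), 1, x) \<in> genrel t ?s" using gr1[OF T3(1), of "Inl l" "Inr x"] T3 l by simp
      show "((1, x), 2, i) \<in> genrel t ?s" using gr2[OF SE[OF E(1)], of "Inl x" "Inr i"] iE x by simp
      show "((0, l), 0, l) \<in> genrel t ?s" using gr1[OF T3(1), of "Inl l" "Inl l"] l by simp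
    qed
    then obtain V where V: "V \<in> pprod t ?s" "Inl l \<in> V" "Inr i \<in> V" by blast
    have "\<exists>W\<in>pprod (pprod t ?s) t. Inl l \<in> W \<and> Inr j \<in> W"
    proof (rule easy3)
      show "((0, l), 1, i) \<in> genrel (pprod t ?s) t" using gr1[OF V(1), of "Inl l" "Inr i"] V by simp
      show "((1, i), 2, j) \<in> genrel (pprod t ?s) t" using gr2[OF T, of "Inl i" "Inr j"] i j by simp
      show "((0, l), 0, l) \<in> genrel (pprod t ?s) t" using gr1[OF V(1), of "Inl l" "Inl l"] V by simp
    qed
    then obtain W where W: "W \<in> t" "Inl l \<in> W" "Inr j \<in> W" using e2 by auto
    have "W = T3" using tsame W T3 l by blast
    moreover have "W = T" using tsame W T j by blast
    ultimately show ?thesis using T3 by simp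
  qed
  have blkT: "T = Inl ` \<phi> E \<union> Inr ` E" if T: "T \<in> t" and j: "Inr j \<in> T" and E: "E \<in> A" "j \<in> E" for T j E
  proof -
    obtain i where i: "Inl i \<in> T" using Istar_Inl[OF t T] by blast
    have "i \<in> {1..n}" using inT[OF T i] carrier_Inl by blast
    then obtain E1 where E1: "E1 \<in> A" "i \<in> \<phi> E1" using coverP by blast
    have "j \<in> E1" using c1[OF T i E1 j] .
    then have "E1 = E" using uA E1 E by blast
    then have iE: "i \<in> \<phi> E" using E1 by simp
    show ?thesis
    proof (rule set_eqI)
      fix p show "p \<in> T \<longleftrightarrow> p \<in> Inl ` \<phi> E \<union> Inr ` E"
      proof (cases p)
        case (Inl y)
        have "Inl y \<in> T \<longleftrightarrow> y \<in> \<phi> E"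
        proof
          assume yT: "Inl y \<in> T"
          have "y \<in> {1..n}" using inT[OF T yT] carrier_Inl by blast
          then obtain E2 where E2: "E2 \<in> A" "y \<in> \<phi> E2" using coverP by blast
          have "j \<in> E2" using c1[OF T yT E2 j] .
          then have "E2 = E" using uA E2 E by blast
          then show "y \<in> \<phi> E" using E2 by simp
        next
          assume "y \<in> \<phi> E" then show "Inl y \<in> T" using c3[OF T i E(1) iE] by blast
        qed
        then show ?thesis using Inl by auto
      next
        case (Inr y)
        have "Inr y \<in> T \<longleftrightarrow> y \<in> E"
        proof
          assume yT: "Inr y \<in> T"
          show "y \<in> E" using c1[OF T i E(1) iE yT] .
        next
          assume "y \<in> E" then show "Inr y \<in> T" using c4[OF T j E] by blast
        qed
        then show ?thesis using Inr by auto
      qed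
    qed
  qed
  show ?thesis
  proof (rule set_eqI, rule iffI)
    fix T assume T: "T \<in> t"
    obtain j where j: "Inr j \<in> T" using Istar_Inr[OF t T] by blast
    have "j \<in> {1..n}" using inT[OF T j] carrier_Inr by blast
    then obtain E where E: "E \<in> A" "j \<in> E" using coverA by blast
    have "T = Inl ` \<phi> E \<union> Inr ` E" using blkT[OF T j E] .
    then show "T \<in> blk A \<phi> (\<lambda>x. x)" unfolding blk_def using E by blast
  next
    fix T assume "T \<in> blk A \<phi> (\<lambda>x. x)"
    then obtain E where E: "E \<in> A" "T = Inl ` \<phi> E \<union> Inr ` E" unfolding blk_def by blast
    obtain x where x: "x \<in> E" using nA[OF E(1)] by blast
    have "Inr x \<in> carrierX n" using subA[OF E(1)] x carrier_Inr by blast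
    then obtain T' where T': "T' \<in> t" "Inr x \<in> T'" using part_cover[OF tp] by blast
    have "T' = Inl ` \<phi> E \<union> Inr ` E" using blkT[OF T'(1) T'(2) E(1) x] .
    then show "T \<in> t" using T' E by simp
  qed
qed

lemma pinv_blk:
  assumes A: "partition_on {1..n} A" and B: "partition_on {1..n} (\<phi> ` A)" and inj: "inj_on \<phi> A"
  shows "pinv n (blk A (\<lambda>x. x) \<phi>) = blk A \<phi> (\<lambda>x. x)"
proof -
  have dA: "disjf A (\<lambda>x. x)" using A by (rule part_disjf_id)
  have dP: "disjf A \<phi>" using B inj by (rule part_disjf)
  have nA: "\<And>E. E \<in> A \<Longrightarrow> E \<noteq> {}" using part_ne_id[OF A] by blast
  have nP: "\<And>E. E \<in> A \<Longrightarrow> \<phi> E \<noteq> {}" using part_ne[OF B] by blast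
  have Aid: "partition_on {1..n} ((\<lambda>x. x) ` A)" using A by simp
  have tI: "blk A \<phi> (\<lambda>x. x) \<in> Istar n" by (rule blk_Istar[OF B Aid inj inj_on_id2])
  have st: "pprod (blk A (\<lambda>x. x) \<phi>) (blk A \<phi> (\<lambda>x. x)) = blk A (\<lambda>x. x) (\<lambda>x. x)"
    by (rule st_prod) (use dA dP nA nP in auto)
  have sts: "pprod (blk A (\<lambda>x. x) (\<lambda>x. x)) (blk A (\<lambda>x. x) \<phi>) = blk A (\<lambda>x. x) \<phi>"
    by (rule st_prod) (use dA dP nA nP in auto)
  have ts: "pprod (blk A \<phi> (\<lambda>x. x)) (blk A (\<lambda>x. x) \<phi>) = blk A \<phi> \<phi>"
    by (rule st_prod) (use dA dP nA nP in auto)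
  have tst: "pprod (blk A \<phi> \<phi>) (blk A \<phi> (\<lambda>x. x)) = blk A \<phi> (\<lambda>x. x)"
    by (rule st_prod) (use dA dP nA nP in auto)
  show ?thesis unfolding pinv_def
  proof (rule the_equality)
    show "blk A \<phi> (\<lambda>x. x) \<in> Istar n \<and>
      pprod (pprod (blk A (\<lambda>x. x) \<phi>) (blk A \<phi> (\<lambda>x. x))) (blk A (\<lambda>x. x) \<phi>) = blk A (\<lambda>x. x) \<phi> \<and>
      pprod (pprod (blk A \<phi> (\<lambda>x. x)) (blk A (\<lambda>x. x) \<phi>)) (blk A \<phi> (\<lambda>x. x)) = blk A \<phi> (\<lambda>x. x)"
      using tI st sts ts tst by simp
  next
    fix t assume "t \<in> Istar n \<and> pprod (pprod (blk A (\<lambda>x. x) \<phi>) t) (blk A (\<lambda>x. x) \<phi>) = blk A (\<lambda>x. x) \<phi> \<and>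
      pprod (pprod t (blk A (\<lambda>x. x) \<phi>)) t = t"
    then show "t = blk A \<phi> (\<lambda>x. x)" using pinv_unique[OF A B inj] by blast
  qed
qed




definition idem :: "nat set set \<Rightarrow> bpart" where
  "idem P = blk P (\<lambda>x. x) (\<lambda>x. x)"

definition omg :: "nat \<Rightarrow> bpart" where
  "omg n = idem {{1..n}}"

lemma conj_formula:
  assumes A: "partition_on {1..n} A" and B: "partition_on {1..n} (\<phi> ` A)" and inj: "inj_on \<phi> A"
  and Q: "partition_on {1..n} Q" and ref: "\<And>i. i \<in> A \<Longrightarrow> \<exists>F\<in>Q. i \<subseteq> F"
  shows "pprod (pprod (pinv n (blk A (\<lambda>x. x) \<phi>)) (idem Q)) (blk A (\<lambda>x. x) \<phi>)
     = blk Q (\<lambda>F. \<Union>{\<phi> i | i. i\<in>A \<and> i \<subseteq> F}) (\<lambda>F. \<Union>{\<phi> i | i. i\<in>A \<and> i \<subseteq> F})"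
proof -
  define m where "m F = \<Union>{\<phi> i | i. i\<in>A \<and> i \<subseteq> F}" for F
  have dA: "disjf A (\<lambda>x. x)" using A by (rule part_disjf_id)
  have dP: "disjf A \<phi>" using B inj by (rule part_disjf)
  have nA: "\<And>E. E \<in> A \<Longrightarrow> E \<noteq> {}" using part_ne_id[OF A] by blast
  have nP: "\<And>E. E \<in> A \<Longrightarrow> \<phi> E \<noteq> {}" using part_ne[OF B] by blast
  have dQ: "disjf Q (\<lambda>x. x)" using Q by (rule part_disjf_id)
  have nQ: "\<And>E. E \<in> Q \<Longrightarrow> E \<noteq> {}" using part_ne_id[OF Q] by blast
  have UA: "\<Union>A = {1..n}" using partition_onD1[OF A] by simp
  have UQ: "\<Union>Q = {1..n}" using partition_onD1[OF Q] by simp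
  have te: "pprod (blk A \<phi> (\<lambda>x. x)) (blk Q (\<lambda>x. x) (\<lambda>x. x)) = blk Q m (\<lambda>x. x)"
    unfolding m_def by (rule pprod_gen1) (use dP nA dQ nQ ref in auto)
  have dm: "disjf Q m"
    unfolding disjf_def
  proof (intro ballI impI)
    fix F F' assume F: "F \<in> Q" "F' \<in> Q" "F \<noteq> F'"
    show "m F \<inter> m F' = {}"
    proof (rule ccontr)
      assume "m F \<inter> m F' \<noteq> {}"
      then obtain x i i' where "x \<in> \<phi> i" "i \<in> A" "i \<subseteq> F" "x \<in> \<phi> i'" "i' \<in> A" "i' \<subseteq> F'"
        unfolding m_def by blast
      moreover have "F \<inter> F' = {}" using dQ F unfolding disjf_def by blast
      ultimately show False using nA dP unfolding disjf_def by (cases "i = i'") blast+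
    qed
  qed
  have nm: "m F \<noteq> {}" if F: "F \<in> Q" for F
  proof -
    obtain x where x: "x \<in> F" using nQ[OF F] by blast
    then have "x \<in> {1..n}" using UQ F by blast
    then obtain i where i: "i \<in> A" "x \<in> i" using UA by blast
    obtain F' where F': "F' \<in> Q" "i \<subseteq> F'" using ref[OF i(1)] by blast
    have "F' = F" using dQ F F' i x unfolding disjf_def by blast
    then have "\<phi> i \<subseteq> m F" unfolding m_def using i F' by blast
    then show ?thesis using nP[OF i(1)] by blast
  qed
  have tes: "pprod (blk Q m (\<lambda>x. x)) (blk A (\<lambda>x. x) \<phi>) = blk Q m m"
  proof -
    have "pprod (blk Q m (\<lambda>x. x)) (blk A (\<lambda>x. x) \<phi>) = blk Q m (\<lambda>i. \<Union>{\<phi> j | j. j\<in>A \<and> j \<subseteq> i})"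
      by (rule pprod_gen2) (use dm dQ nm nQ dP nA ref in auto)
    then show ?thesis unfolding m_def .
  qed
  show ?thesis
    unfolding pinv_blk[OF A B inj] idem_def te tes m_def[symmetric] ..
qed

lemma idem_Istar: "partition_on {1..n} P \<Longrightarrow> idem P \<in> Istar n"
  unfolding idem_def by (rule blk_Istar) (auto intro: inj_on_id2)

definition refn :: "nat set set \<Rightarrow> nat set set \<Rightarrow> bool" where
  "refn P Q \<longleftrightarrow> (\<forall>i\<in>P. \<exists>F\<in>Q. i \<subseteq> F)"

lemma idem_mult_ref:
  assumes P: "partition_on {1..n} P" and Q: "partition_on {1..n} Q" and r: "refn P Q"
  shows "pprod (idem P) (idem Q) = idem Q"
proof -
  have dP: "disjf P (\<lambda>x. x)" using P by (rule part_disjf_id)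
  have nP: "\<And>E. E \<in> P \<Longrightarrow> E \<noteq> {}" using part_ne_id[OF P] by blast
  have dQ: "disjf Q (\<lambda>x. x)" using Q by (rule part_disjf_id)
  have nQ: "\<And>E. E \<in> Q \<Longrightarrow> E \<noteq> {}" using part_ne_id[OF Q] by blast
  have UP: "\<Union>P = {1..n}" using partition_onD1[OF P] by simp
  have UQ: "\<Union>Q = {1..n}" using partition_onD1[OF Q] by simp
  have "pprod (idem P) (idem Q) = blk Q (\<lambda>j. \<Union>{i | i. i\<in>P \<and> i \<subseteq> j}) (\<lambda>x. x)"
    unfolding idem_def by (rule pprod_gen1) (use dP nP dQ nQ r in \<open>auto simp: refn_def\<close>)
  also have "\<dots> = idem Q" unfolding idem_def
  proof (rule blk_cong)
    fix j assume j: "j \<in> Q"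
    show "\<Union>{i | i. i\<in>P \<and> i \<subseteq> j} = j"
    proof
      show "\<Union>{i | i. i\<in>P \<and> i \<subseteq> j} \<subseteq> j" by blast
      show "j \<subseteq> \<Union>{i | i. i\<in>P \<and> i \<subseteq> j}"
      proof
        fix x assume x: "x \<in> j"
        then have "x \<in> {1..n}" using UQ j by blast
        then obtain i where i: "i \<in> P" "x \<in> i" using UP by blast
        obtain F where F: "F \<in> Q" "i \<subseteq> F" using r i unfolding refn_def by blast
        have "F = j" using dQ F j i x unfolding disjf_def by blast
        then show "x \<in> \<Union>{i | i. i\<in>P \<and> i \<subseteq> j}" using i F by blast
      qed
    qed
  qed simp
  finally show ?thesis .
qed

lemma refn_refl: "refn P P" unfolding refn_def by blast

lemma idem_En: "partition_on {1..n} P \<Longrightarrow> idem P \<in> En n"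
  unfolding En_def using idem_Istar idem_mult_ref refn_refl by blast

lemma omg_part: fixes n :: nat assumes "n \<ge> 1" shows "partition_on {1..n} {{1..n}}"
proof (rule partition_on_space)
  have "1 \<in> {1..n}" using assms by simp
  then show "{1..n} \<noteq> {}" by blast
qed

lemma omg_En: "n \<ge> 1 \<Longrightarrow> omg n \<in> En n"
  unfolding omg_def by (rule idem_En) (rule omg_part)

lemma omg_mult:
  assumes n: "n \<ge> 1" and Q: "partition_on {1..n} Q"
  shows "pprod (omg n) (idem Q) = omg n"
proof -
  have dQ: "disjf Q (\<lambda>x. x)" using Q by (rule part_disjf_id)
  have nQ: "\<And>E. E \<in> Q \<Longrightarrow> E \<noteq> {}" using part_ne_id[OF Q] by blast
  have UQ: "\<Union>Q = {1..n}" using partition_onD1[OF Q] by simp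
  have "pprod (omg n) (idem Q) = blk {{1..n}} (\<lambda>x. x) (\<lambda>i. \<Union>{j | j. j\<in>Q \<and> j \<subseteq> i})"
    unfolding omg_def idem_def by (rule pprod_gen2) (use dQ nQ UQ n in \<open>auto simp: disjf_def\<close>)
  also have "\<dots> = omg n" unfolding omg_def idem_def
  proof (rule blk_cong)
    have "{j | j. j\<in>Q \<and> j \<subseteq> {1..n}} = Q" using UQ by blast
    then show "\<Union>{j | j. j\<in>Q \<and> j \<subseteq> i} = i" if "i \<in> {{1..n}}" for i using that UQ by simp
  qed simp
  finally show ?thesis .
qed

lemma bf_inj: "inj (\<lambda>E. Inl ` E \<union> Inr ` (E::nat set) :: pt set)"
proof (rule injI)
  fix E E' :: "nat set" assume "Inl ` E \<union> Inr ` E = (Inl ` E' \<union> Inr ` E' :: pt set)"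
  then have "\<And>x. (Inl x \<in> Inl ` E \<union> Inr ` E) = (Inl x \<in> (Inl ` E' \<union> Inr ` E' :: pt set))" by simp
  then show "E = E'" by auto
qed

lemma idem_alt: "idem P = (\<lambda>E. Inl ` E \<union> Inr ` E) ` P"
  unfolding idem_def blk_def ..

lemma rank_idem: "rank (idem P) = card P"
  unfolding rank_def idem_alt by (rule card_image) (rule inj_on_subset[OF bf_inj], simp)

lemma idem_inj: "idem P = idem Q \<Longrightarrow> P = Q"
  unfolding idem_alt using bf_inj by (simp add: inj_image_eq_iff)

lemma En_idem:
  assumes e: "e \<in> En n"
  shows "\<exists>P. partition_on {1..n} P \<and> e = idem P"
proof -
  have eI: "e \<in> Istar n" and ee: "pprod e e = e" using e unfolding En_def by auto
  have ep: "partition_on (carrierX n) e" using eI by (rule Istar_part)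
  have inW: "\<And>W p. W \<in> e \<Longrightarrow> p \<in> W \<Longrightarrow> p \<in> carrierX n" using part_sub[OF ep] by blast
  have same: "\<And>W1 W2 p. W1 \<in> e \<Longrightarrow> W2 \<in> e \<Longrightarrow> p \<in> W1 \<Longrightarrow> p \<in> W2 \<Longrightarrow> W1 = W2"
    by (rule part_same[OF ep])
  have LR: "Inr i \<in> W" if W: "W \<in> e" and i: "Inl i \<in> W" for W i
  proof -
    have "i \<in> {1..n}" using inW[OF W i] carrier_Inl by blast
    then have "Inr i \<in> carrierX n" using carrier_Inr by blast
    then obtain W2 where W2: "W2 \<in> e" "Inr i \<in> W2" using part_cover[OF ep] by blast
    obtain l where l: "Inl l \<in> W2" using Istar_Inl[OF eI W2(1)] by blast
    obtain r where r: "Inr r \<in> W" using Istar_Inr[OF eI W] by blast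
    have "\<exists>V\<in>pprod e e. Inl l \<in> V \<and> Inr r \<in> V"
    proof (rule easy3)
      show "((0, l), 1, i) \<in> genrel e e" using gr1[OF W2(1), of "Inl l" "Inr i"] W2 l by simp
      show "((1, i), 2, r) \<in> genrel e e" using gr2[OF W, of "Inl i" "Inr r"] i r by simp
      show "((0, l), 0, l) \<in> genrel e e" using gr1[OF W2(1), of "Inl l" "Inl l"] l by simp
    qed
    then obtain V where V: "V \<in> e" "Inl l \<in> V" "Inr r \<in> V" using ee by auto
    have "V = W2" using same V W2 l by blast
    moreover have "V = W" using same V W r by blast
    ultimately show ?thesis using W2 by simp
  qed
  have RL: "Inl i \<in> W" if W: "W \<in> e" and i: "Inr i \<in> W" for W i
  proof -
    have "i \<in> {1..n}" using inW[OF W i] carrier_Inr by blast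
    then have "Inl i \<in> carrierX n" using carrier_Inl by blast
    then obtain W1 where W1: "W1 \<in> e" "Inl i \<in> W1" using part_cover[OF ep] by blast
    have "Inr i \<in> W1" using LR[OF W1] .
    then have "W1 = W" using same W1 W i by blast
    then show ?thesis using W1 by simp
  qed
  define L where "L W = {i::nat. Inl i \<in> (W::pt set)}" for W
  have Weq: "W = Inl ` L W \<union> Inr ` L W" if W: "W \<in> e" for W
  proof (rule set_eqI)
    fix p show "p \<in> W \<longleftrightarrow> p \<in> Inl ` L W \<union> Inr ` L W"
      by (cases p) (auto simp: L_def intro: LR[OF W] RL[OF W])
  qed
  have eq: "e = idem (L ` e)"
    unfolding idem_alt image_image using Weq by (simp add: image_cong[OF refl Weq] )
  have part: "partition_on {1..n} (L ` e)"
  proof (rule partition_onI)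
    show "\<Union>(L ` e) = {1..n}"
    proof
      show "\<Union>(L ` e) \<subseteq> {1..n}"
      proof
        fix i assume "i \<in> \<Union>(L ` e)"
        then obtain W where W: "W \<in> e" "Inl i \<in> W" unfolding L_def by blast
        show "i \<in> {1..n}" using inW[OF W] carrier_Inl by blast
      qed
      show "{1..n} \<subseteq> \<Union>(L ` e)"
      proof
        fix i assume "i \<in> {1..n}"
        then have "Inl i \<in> carrierX n" using carrier_Inl by blast
        then obtain W where "W \<in> e" "Inl i \<in> W" using part_cover[OF ep] by blast
        then show "i \<in> \<Union>(L ` e)" unfolding L_def by blast
      qed
    qed
  next
    fix p q assume "p \<in> L ` e" "q \<in> L ` e" "p \<noteq> q"
    then obtain W W' where "W \<in> e" "W' \<in> e" "p = L W" "q = L W'" by blast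
    then have WW: "W \<noteq> W'" using \<open>p \<noteq> q\<close> by auto
    have "W \<inter> W' = {}" using disjointD[OF partition_onD2[OF ep] \<open>W \<in> e\<close> \<open>W' \<in> e\<close> WW] .
    then show "disjnt p q" unfolding disjnt_def \<open>p = L W\<close> \<open>q = L W'\<close> L_def by auto
  next
    show "{} \<notin> L ` e"
    proof
      assume "{} \<in> L ` e"
      then obtain W where "W \<in> e" "L W = {}" by blast
      then show False using Istar_Inl[OF eI] unfolding L_def by blast
    qed
  qed
  show ?thesis using eq part by blast
qed




lemma part_fin: "partition_on {1..(n::nat)} P \<Longrightarrow> finite P"
  by (rule finite_elements[of "{1..n}"]) auto

lemma part_uniq_block:
  assumes Q: "partition_on S Q" and G: "G \<in> Q" "G' \<in> Q" and x: "x \<in> G" "x \<in> G'"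
  shows "G = G'"
  by (rule part_same[OF Q G x])

lemma part_sub_eq:
  assumes P: "partition_on S P" and Q: "partition_on S Q" and sub: "P \<subseteq> Q"
  shows "P = Q"
proof
  show "P \<subseteq> Q" by (rule sub)
  show "Q \<subseteq> P"
  proof
    fix F assume F: "F \<in> Q"
    have "F \<noteq> {}" using partition_onD3[OF Q] F by blast
    then obtain x where x: "x \<in> F" by blast
    have "x \<in> S" using part_sub[OF Q F] x by blast
    then obtain E where E: "E \<in> P" "x \<in> E" using part_cover[OF P] by blast
    have "E \<in> Q" using sub E by blast
    then have "E = F" using part_same[OF Q _ F E(2) x] by blast
    then show "F \<in> P" using E by simp
  qed
qed

lemma refn_block:
  assumes P: "partition_on S P" and Q: "partition_on S Q" and r: "refn P Q"
  and E: "E \<in> P" and F: "F \<in> Q" and x: "x \<in> E" "x \<in> F"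
  shows "E \<subseteq> F"
proof -
  obtain F' where F': "F' \<in> Q" "E \<subseteq> F'" using r E unfolding refn_def by blast
  have "F' = F" using part_same[OF Q F'(1) F] F' x by blast
  then show ?thesis using F' by simp
qed

lemma refn_trans: "refn P Q \<Longrightarrow> refn Q R \<Longrightarrow> refn P R"
  unfolding refn_def by (meson order_trans)

lemma card_refn:
  assumes P: "partition_on {1..(n::nat)} P" and Q: "partition_on {1..n} Q" and r: "refn P Q"
  shows "card Q \<le> card P"
    and "F1 \<in> P \<Longrightarrow> F2 \<in> P \<Longrightarrow> F1 \<noteq> F2 \<Longrightarrow> G \<in> Q \<Longrightarrow> F1 \<subseteq> G \<Longrightarrow> F2 \<subseteq> G \<Longrightarrow> card Q < card P"
proof -
  define h where "h E = (SOME G. G \<in> Q \<and> E \<subseteq> G)" for E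
  have h: "h E \<in> Q \<and> E \<subseteq> h E" if "E \<in> P" for E
  proof -
    have "\<exists>G. G \<in> Q \<and> E \<subseteq> G" using r that unfolding refn_def by blast
    then show ?thesis unfolding h_def by (rule someI_ex)
  qed
  have huniq: "h E = G" if "E \<in> P" "G \<in> Q" "E \<subseteq> G" for E G
  proof -
    have "E \<noteq> {}" using partition_onD3[OF P] that(1) by blast
    then obtain x where "x \<in> E" by blast
    then show ?thesis using part_same[OF Q _ that(2)] h[OF that(1)] that(3) by blast
  qed
  have Qeq: "Q = h ` P"
  proof
    show "h ` P \<subseteq> Q" using h by blast
    show "Q \<subseteq> h ` P"
    proof
      fix G assume G: "G \<in> Q"
      have "G \<noteq> {}" using partition_onD3[OF Q] G by blast
      then obtain x where x: "x \<in> G" by blast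
      have "x \<in> {1..n}" using part_sub[OF Q G] x by blast
      then obtain E where E: "E \<in> P" "x \<in> E" using part_cover[OF P] by blast
      have "E \<subseteq> G" by (rule refn_block[OF P Q r E(1) G E(2) x])
      then have "h E = G" using huniq E G by blast
      then show "G \<in> h ` P" using E by blast
    qed
  qed
  have fP: "finite P" using part_fin[OF P] .
  show "card Q \<le> card P" unfolding Qeq by (rule card_image_le[OF fP])
  assume F: "F1 \<in> P" "F2 \<in> P" "F1 \<noteq> F2" "G \<in> Q" "F1 \<subseteq> G" "F2 \<subseteq> G"
  have "h F1 = h F2" using huniq[OF F(1,4,5)] huniq[OF F(2,4,6)] by simp
  then have "\<not> inj_on h P" using F unfolding inj_on_def by blast
  then have "card (h ` P) \<noteq> card P" using inj_on_iff_eq_card[OF fP] by blast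
  moreover have "card (h ` P) \<le> card P" by (rule card_image_le[OF fP])
  ultimately show "card Q < card P" unfolding Qeq by simp
qed

lemma blk_same_idem: "blk I f f = idem (f ` I)"
  unfolding blk_def idem_alt image_image ..

lemma idem_prod_easy:
  assumes P: "partition_on {1..n} P" and Q: "partition_on {1..n} Q"
  and W: "pprod (idem P) (idem Q) = idem W"
  shows "\<And>E i j. E \<in> P \<Longrightarrow> i \<in> E \<Longrightarrow> j \<in> E \<Longrightarrow> \<exists>G\<in>W. i \<in> G \<and> j \<in> G"
    and "\<And>F i j. F \<in> Q \<Longrightarrow> i \<in> F \<Longrightarrow> j \<in> F \<Longrightarrow> \<exists>G\<in>W. i \<in> G \<and> j \<in> G"
proof -
  have BP: "\<And>E. E \<in> P \<Longrightarrow> Inl ` E \<union> Inr ` E \<in> idem P" unfolding idem_alt by (rule imageI)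
  have BQ: "\<And>E. E \<in> Q \<Longrightarrow> Inl ` E \<union> Inr ` E \<in> idem Q" unfolding idem_alt by (rule imageI)
  have fin: "\<exists>G\<in>W. i \<in> G \<and> j \<in> G" if a1: "((0,i),(0,j)) \<in> (genrel (idem P) (idem Q))\<^sup>*"
     and a2: "((0,i),(0,i)) \<in> genrel (idem P) (idem Q)" for i j
  proof -
    obtain V where V: "V \<in> pprod (idem P) (idem Q)" "down (0,i) \<in> V" "down (0,j) \<in> V"
      using pprod_easy[OF a1 _ _ a2] by auto
    have "V \<in> idem W" using V(1) W by simp
    then obtain G where G: "G \<in> W" "V = Inl ` G \<union> Inr ` G" unfolding idem_alt by blast
    show ?thesis using V(2,3) G by auto
  qed
  show "\<exists>G\<in>W. i \<in> G \<and> j \<in> G" if "E \<in> P" "i \<in> E" "j \<in> E" for E i j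
  proof (rule fin)
    show "((0, i), 0, j) \<in> (genrel (idem P) (idem Q))\<^sup>*"
      using gr1[OF BP[OF that(1)], of "Inl i" "Inl j"] that by auto
    show "((0, i), 0, i) \<in> genrel (idem P) (idem Q)"
      using gr1[OF BP[OF that(1)], of "Inl i" "Inl i"] that by auto
  qed
  show "\<exists>G\<in>W. i \<in> G \<and> j \<in> G" if F: "F \<in> Q" "i \<in> F" "j \<in> F" for F i j
  proof -
    have "i \<in> {1..n}" "j \<in> {1..n}" using part_sub[OF Q F(1)] F by auto
    then obtain Ei Ej where Ei: "Ei \<in> P" "i \<in> Ei" and Ej: "Ej \<in> P" "j \<in> Ej"
      using part_cover[OF P] by meson
    have s1: "((0,i),(1,i)) \<in> genrel (idem P) (idem Q)"
      using gr1[OF BP[OF Ei(1)], of "Inl i" "Inr i"] Ei by auto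
    have s2: "((1,i),(1,j)) \<in> genrel (idem P) (idem Q)"
      using gr2[OF BQ[OF F(1)], of "Inl i" "Inl j"] F by auto
    have s3: "((1,j),(0,j)) \<in> genrel (idem P) (idem Q)"
      using gr1[OF BP[OF Ej(1)], of "Inr j" "Inl j"] Ej by auto
    have s0: "((0,i),(0,i)) \<in> genrel (idem P) (idem Q)"
      using gr1[OF BP[OF Ei(1)], of "Inl i" "Inl i"] Ei by auto
    have "((0,i),(0,j)) \<in> (genrel (idem P) (idem Q))\<^sup>*"
      using s1 s2 s3 by (meson converse_rtrancl_into_rtrancl r_into_rtrancl)
    then show ?thesis using fin s0 by blast
  qed
qed

lemma block_in:
  assumes W: "partition_on S W" and E: "E \<noteq> {}" "E \<subseteq> S"
  and h: "\<And>i j. i \<in> E \<Longrightarrow> j \<in> E \<Longrightarrow> \<exists>G\<in>W. i \<in> G \<and> j \<in> G"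
  shows "\<exists>G\<in>W. E \<subseteq> G"
proof -
  obtain x where x: "x \<in> E" using E by blast
  then obtain G where G: "G \<in> W" "x \<in> G" using part_cover[OF W] E by blast
  have "E \<subseteq> G"
  proof
    fix y assume y: "y \<in> E"
    obtain G' where G': "G' \<in> W" "x \<in> G'" "y \<in> G'" using h[OF x y] by blast
    have "G' = G" using part_same[OF W G'(1) G(1) G'(2) G(2)] .
    then show "y \<in> G" using G' by simp
  qed
  then show ?thesis using G by blast
qed

lemma card_part_ge1: assumes "n \<ge> 1" "partition_on {1..(n::nat)} P" shows "card P \<ge> 1"
proof -
  have "P \<noteq> {}" using partition_onD1[OF assms(2)] assms(1) by auto
  then show ?thesis using part_fin[OF assms(2)] by (simp add: Suc_le_eq card_gt_0_iff)
qed

lemma card_part_le: assumes "partition_on {1..(n::nat)} P" shows "card P \<le> n"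
proof -
  define f where "f E = (SOME x. x \<in> E)" for E :: "nat set"
  have f: "f E \<in> E" if "E \<in> P" for E
  proof -
    have "E \<noteq> {}" using partition_onD3[OF assms] that by blast
    then show ?thesis unfolding f_def by (simp add: some_in_eq)
  qed
  have "inj_on f P"
  proof (rule inj_onI)
    fix E E' assume "E \<in> P" "E' \<in> P" "f E = f E'"
    then show "E = E'" using part_same[OF assms] f by metis
  qed
  moreover have "f ` P \<subseteq> {1..n}" using f part_sub[OF assms] by blast
  ultimately have "card P \<le> card {1..n}" by (rule card_inj_on_le) simp
  then show ?thesis by simp
qed




context
  fixes n :: nat and L :: "(bpart \<times> bpart) set"
  assumes n1: "n \<ge> 1" and nc: "normal_congruence n L"
begin

lemma Leq: "equiv (En n) L"
  using nc unfolding normal_congruence_def semilattice_congruence_def by blast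

lemma Lsub: "(e,f) \<in> L \<Longrightarrow> e \<in> En n \<and> f \<in> En n"
  using equiv_type[OF Leq] by blast

lemma Lrefl: "e \<in> En n \<Longrightarrow> (e,e) \<in> L"
  using Leq unfolding equiv_def refl_on_def by blast

lemma Lsym: "(e,f) \<in> L \<Longrightarrow> (f,e) \<in> L"
  using Leq unfolding equiv_def by (meson symD)

lemma Ltrans: "(e,f) \<in> L \<Longrightarrow> (f,g) \<in> L \<Longrightarrow> (e,g) \<in> L"
  using Leq unfolding equiv_def by (meson transD)

lemma LR: "(e,f) \<in> L \<Longrightarrow> g \<in> En n \<Longrightarrow> (pprod e g, pprod f g) \<in> L"
  using nc unfolding normal_congruence_def semilattice_congruence_def by blast

lemma LL: "(e,f) \<in> L \<Longrightarrow> g \<in> En n \<Longrightarrow> (pprod g e, pprod g f) \<in> L"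
  using nc unfolding normal_congruence_def semilattice_congruence_def by blast

lemma LN: "(e,f) \<in> L \<Longrightarrow> s \<in> Istar n \<Longrightarrow> (pprod (pprod (pinv n s) e) s, pprod (pprod (pinv n s) f) s) \<in> L"
  using nc unfolding normal_congruence_def by blast

lemma idem_part_of:
  assumes "idem P \<in> En n" shows "partition_on {1..n} P"
proof -
  obtain Q where "partition_on {1..n} Q" "idem P = idem Q" using En_idem[OF assms] by blast
  then show ?thesis using idem_inj by metis
qed

lemma refn_of_prod1:
  assumes P: "partition_on {1..n} P" and Q: "partition_on {1..n} Q" and W: "partition_on {1..n} W"
  and eq: "pprod (idem P) (idem Q) = idem W"
  shows "refn P W"
  unfolding refn_def
proof
  fix E assume E: "E \<in> P"
  show "\<exists>F\<in>W. E \<subseteq> F"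
  proof (rule block_in[OF W])
    show "E \<noteq> {}" using part_ne_id[OF P E] .
    show "E \<subseteq> {1..n}" using part_sub[OF P E] .
    show "\<exists>G\<in>W. i \<in> G \<and> j \<in> G" if "i \<in> E" "j \<in> E" for i j
      using idem_prod_easy(1)[OF P Q eq E that] .
  qed
qed

lemma refn_of_prod2:
  assumes P: "partition_on {1..n} P" and Q: "partition_on {1..n} Q" and W: "partition_on {1..n} W"
  and eq: "pprod (idem P) (idem Q) = idem W"
  shows "refn Q W"
  unfolding refn_def
proof
  fix E assume E: "E \<in> Q"
  show "\<exists>F\<in>W. E \<subseteq> F"
  proof (rule block_in[OF W])
    show "E \<noteq> {}" using part_ne_id[OF Q E] .
    show "E \<subseteq> {1..n}" using part_sub[OF Q E] .
    show "\<exists>G\<in>W. i \<in> G \<and> j \<in> G" if "i \<in> E" "j \<in> E" for i j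
      using idem_prod_easy(2)[OF P Q eq E that] .
  qed
qed

lemma Amain:
  "partition_on {1..n} Y \<Longrightarrow> partition_on {1..n} X \<Longrightarrow> refn X Y \<Longrightarrow> X \<noteq> Y \<Longrightarrow> (idem X, idem Y) \<in> L
    \<Longrightarrow> (idem X, omg n) \<in> L"
proof (induction "card Y" arbitrary: Y rule: less_induct)
  case less
  note Yp = less.prems(1) and Xp = less.prems(2) and r = less.prems(3) and XY = less.prems(4)
    and inL = less.prems(5)
  have fY: "finite Y" using part_fin[OF Yp] .
  have UY: "\<Union>Y = {1..n}" using partition_onD1[OF Yp] by simp
  show ?case
  proof (cases "card Y \<le> 1")
    case True
    then have "card Y = 1" using card_part_ge1[OF n1 Yp] by simp
    then obtain F where F: "Y = {F}" by (rule card_1_singletonE)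
    then have "F = {1..n}" using UY by simp
    then have "idem Y = omg n" unfolding omg_def using F by simp
    then show ?thesis using inL by simp
  next
    case False
    have "\<not> X \<subseteq> Y" using part_sub_eq[OF Xp Yp] XY by blast
    then obtain E1 where E1: "E1 \<in> X" "E1 \<notin> Y" by blast
    obtain F where F: "F \<in> Y" "E1 \<subseteq> F" using r E1(1) unfolding refn_def by blast
    have "E1 \<noteq> F" using E1 F by blast
    then obtain z where z: "z \<in> F" "z \<notin> E1" using F(2) by blast
    have "z \<in> {1..n}" using part_sub[OF Yp F(1)] z by blast
    then obtain E2 where E2: "E2 \<in> X" "z \<in> E2" using part_cover[OF Xp] by blast
    have E2F: "E2 \<subseteq> F" by (rule refn_block[OF Xp Yp r E2(1) F(1) E2(2) z(1)])
    have E12: "E1 \<noteq> E2" using z E2 by blast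
    have "\<not> Y \<subseteq> {F}"
    proof
      assume "Y \<subseteq> {F}"
      then have "card Y \<le> card {F}" by (rule card_mono[rotated]) simp
      then show False using False by simp
    qed
    then obtain F2 where F2: "F2 \<in> Y" "F2 \<noteq> F" by blast
    obtain w where w: "w \<in> F2" using part_ne_id[OF Yp F2(1)] by blast
    have "w \<in> {1..n}" using part_sub[OF Yp F2(1)] w by blast
    then obtain E3 where E3: "E3 \<in> X" "w \<in> E3" using part_cover[OF Xp] by blast
    have E3F: "E3 \<subseteq> F2" by (rule refn_block[OF Xp Yp r E3(1) F2(1) E3(2) w])
    have FF: "F \<inter> F2 = {}" using part_disjf_id[OF Yp] F(1) F2 unfolding disjf_def by blast
    have E1ne: "E1 \<noteq> {}" using part_ne_id[OF Xp E1(1)] .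
    have E2ne: "E2 \<noteq> {}" using part_ne_id[OF Xp E2(1)] .
    have E13: "E1 \<noteq> E3" using E1ne F(2) E3F FF by blast
    have E23: "E2 \<noteq> E3" using E2ne E2F E3F FF by blast
    define \<phi> where "\<phi> E = (if E = E2 then E3 else if E = E3 then E2 else E)" for E
    have invol: "\<phi> (\<phi> E) = E" for E unfolding \<phi>_def using E23 by auto
    have inj: "inj_on \<phi> X" by (rule inj_onI) (metis invol)
    have \<phi>in: "\<phi> E \<in> X" if "E \<in> X" for E unfolding \<phi>_def using that E2 E3 by auto
    have \<phi>X: "\<phi> ` X = X"
    proof
      show "\<phi> ` X \<subseteq> X" using \<phi>in by blast
      show "X \<subseteq> \<phi> ` X"
      proof
        fix E assume "E \<in> X"
        then show "E \<in> \<phi> ` X" using invol[of E] \<phi>in by (metis imageI)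
      qed
    qed
    have Bp: "partition_on {1..n} (\<phi> ` X)" using \<phi>X Xp by simp
    have Xid: "partition_on {1..n} ((\<lambda>x. x) ` X)" using Xp by simp
    have sI: "blk X (\<lambda>x. x) \<phi> \<in> Istar n" by (rule blk_Istar[OF Xid Bp inj_on_id2 inj])
    define m where "m F = \<Union>{\<phi> i | i. i\<in>X \<and> i \<subseteq> F}" for F
    have dX: "disjf X (\<lambda>x. x)" using part_disjf_id[OF Xp] .
    have nX: "\<And>E. E \<in> X \<Longrightarrow> E \<noteq> {}" using part_ne_id[OF Xp] by blast
    have cX: "pprod (pprod (pinv n (blk X (\<lambda>x. x) \<phi>)) (idem X)) (blk X (\<lambda>x. x) \<phi>) = idem X"
    proof -
      have "pprod (pprod (pinv n (blk X (\<lambda>x. x) \<phi>)) (idem X)) (blk X (\<lambda>x. x) \<phi>) = blk X m m"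
        unfolding m_def by (rule conj_formula[OF Xp Bp inj Xp]) blast
      also have "\<dots> = blk X \<phi> \<phi>"
        by (rule blk_cong) (use sel_unique[OF dX nX, of _ \<phi>] in \<open>auto simp: m_def\<close>)
      also have "\<dots> = idem X" unfolding blk_same_idem \<phi>X ..
      finally show ?thesis .
    qed
    have cY: "pprod (pprod (pinv n (blk X (\<lambda>x. x) \<phi>)) (idem Y)) (blk X (\<lambda>x. x) \<phi>) = idem (m ` Y)"
    proof -
      have "pprod (pprod (pinv n (blk X (\<lambda>x. x) \<phi>)) (idem Y)) (blk X (\<lambda>x. x) \<phi>) = blk Y m m"
        unfolding m_def by (rule conj_formula[OF Xp Bp inj Yp]) (use r in \<open>auto simp: refn_def\<close>)
      also have "\<dots> = idem (m ` Y)" unfolding blk_same_idem ..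
      finally show ?thesis .
    qed
    have inL2: "(idem X, idem (m ` Y)) \<in> L" using LN[OF inL sI] unfolding cX cY .
    have gEn: "idem (m ` Y) \<in> En n" using Lsub[OF inL2] by blast
    have Y'p: "partition_on {1..n} (m ` Y)" by (rule idem_part_of[OF gEn])
    have rXY': "refn X (m ` Y)"
      unfolding refn_def
    proof
      fix E assume E: "E \<in> X"
      obtain F' where F': "F' \<in> Y" "\<phi> E \<subseteq> F'" using r \<phi>in[OF E] unfolding refn_def by blast
      have "\<phi> (\<phi> E) \<subseteq> m F'" unfolding m_def using \<phi>in[OF E] F'(2) by blast
      then show "\<exists>F\<in>m ` Y. E \<subseteq> F" using invol[of E] F'(1) by auto
    qed
    have gx: "pprod (idem X) (idem (m ` Y)) = idem (m ` Y)" by (rule idem_mult_ref[OF Xp Y'p rXY'])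
    have "(pprod (idem X) (idem (m ` Y)), pprod (idem Y) (idem (m ` Y))) \<in> L" by (rule LR[OF inL gEn])
    then have inL3: "(idem (m ` Y), pprod (idem Y) (idem (m ` Y))) \<in> L" unfolding gx .
    have wEn: "pprod (idem Y) (idem (m ` Y)) \<in> En n" using Lsub[OF inL3] by blast
    obtain W where Wp: "partition_on {1..n} W" and weq: "pprod (idem Y) (idem (m ` Y)) = idem W"
      using En_idem[OF wEn] by blast
    have inLW: "(idem X, idem W) \<in> L" using Ltrans[OF inL2 inL3] unfolding weq .
    have rYW: "refn Y W" by (rule refn_of_prod1[OF Yp Y'p Wp weq])
    obtain a where a: "a \<in> E1" using E1ne by blast
    obtain b where b: "b \<in> E3" using E3 by blast
    have "\<phi> E1 = E1" unfolding \<phi>_def using E12 E13 by auto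
    then have "E1 \<subseteq> m F" unfolding m_def using E1(1) F(2) by blast
    moreover have "\<phi> E2 = E3" unfolding \<phi>_def by simp
    then have "E3 \<subseteq> m F" unfolding m_def using E2(1) E2F by blast
    ultimately have ab: "a \<in> m F" "b \<in> m F" using a b by blast+
    obtain G where G: "G \<in> W" "a \<in> G" "b \<in> G"
      using idem_prod_easy(2)[OF Yp Y'p weq _ ab] F(1) by blast
    obtain G1 where G1: "G1 \<in> W" "F \<subseteq> G1" using rYW F(1) unfolding refn_def by blast
    have "G1 = G" using part_same[OF Wp G1(1) G(1)] G1(2) F(2) a G(2) by blast
    then have FG: "F \<subseteq> G" using G1 by simp
    obtain G2 where G2: "G2 \<in> W" "F2 \<subseteq> G2" using rYW F2(1) unfolding refn_def by blast
    have "G2 = G" using part_same[OF Wp G2(1) G(1)] G2(2) E3F b G(3) by blast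
    then have F2G: "F2 \<subseteq> G" using G2 by simp
    have cWY: "card W < card Y" by (rule card_refn(2)[OF Yp Wp rYW F(1) F2(1) F2(2)[symmetric] G(1) FG F2G])
    have "card Y \<le> card X" by (rule card_refn(1)[OF Xp Yp r])
    then have XW: "X \<noteq> W" using cWY by auto
    have rXW: "refn X W" using refn_trans[OF r rYW] .
    show ?thesis by (rule less.hyps[OF cWY Wp Xp rXW XW inLW])
  qed
qed

lemma Astep:
  assumes xy: "(x,y) \<in> L" and ne: "x \<noteq> y"
  shows "(x, omg n) \<in> L"
proof -
  have xE: "x \<in> En n" and yE: "y \<in> En n" using Lsub[OF xy] by auto
  obtain X where Xp: "partition_on {1..n} X" and X: "x = idem X" using En_idem[OF xE] by blast
  obtain Y where Yp: "partition_on {1..n} Y" and Y: "y = idem Y" using En_idem[OF yE] by blast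
  have xx: "pprod x x = x" using xE unfolding En_def by blast
  have yy: "pprod y y = y" using yE unfolding En_def by blast
  have L1: "(x, pprod x y) \<in> L" using LL[OF xy xE] unfolding xx .
  have L2: "(pprod x y, y) \<in> L" using LR[OF xy yE] unfolding yy .
  have wE: "pprod x y \<in> En n" using Lsub[OF L2] by blast
  obtain W where Wp: "partition_on {1..n} W" and W: "pprod x y = idem W" using En_idem[OF wE] by blast
  have weq: "pprod (idem X) (idem Y) = idem W" using W X Y by simp
  have rXW: "refn X W" by (rule refn_of_prod1[OF Xp Yp Wp weq])
  have rYW: "refn Y W" by (rule refn_of_prod2[OF Xp Yp Wp weq])
  show ?thesis
  proof (cases "X = W")
    case False
    have "(idem X, idem W) \<in> L" using L1 X W by simp
    then show ?thesis using Amain[OF Wp Xp rXW False] X by simp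
  next
    case True
    then have YW: "Y \<noteq> W" using ne X Y by auto
    have "(idem Y, idem W) \<in> L" using Lsym[OF L2] Y W by simp
    then have "(y, omg n) \<in> L" using Amain[OF Wp Yp rYW YW] Y by simp
    then show ?thesis using Ltrans[OF xy] by blast
  qed
qed

lemma Bsame:
  assumes inL: "(idem A, omg n) \<in> L" and A: "partition_on {1..n} A" and B: "partition_on {1..n} B"
  and c: "card B = card A"
  shows "(idem B, omg n) \<in> L"
proof -
  obtain \<phi> where bij: "bij_betw \<phi> A B"
    using finite_same_card_bij[OF part_fin[OF A] part_fin[OF B]] c by metis
  have \<phi>A: "\<phi> ` A = B" and inj: "inj_on \<phi> A" using bij unfolding bij_betw_def by auto
  have Bp: "partition_on {1..n} (\<phi> ` A)" using B \<phi>A by simp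
  have Aid: "partition_on {1..n} ((\<lambda>x. x) ` A)" using A by simp
  have sI: "blk A (\<lambda>x. x) \<phi> \<in> Istar n" by (rule blk_Istar[OF Aid Bp inj_on_id2 inj])
  have dA: "disjf A (\<lambda>x. x)" using part_disjf_id[OF A] .
  have nA: "\<And>E. E \<in> A \<Longrightarrow> E \<noteq> {}" using part_ne_id[OF A] by blast
  define m where "m F = \<Union>{\<phi> i | i. i\<in>A \<and> i \<subseteq> F}" for F
  have c1: "pprod (pprod (pinv n (blk A (\<lambda>x. x) \<phi>)) (idem A)) (blk A (\<lambda>x. x) \<phi>) = idem B"
  proof -
    have "pprod (pprod (pinv n (blk A (\<lambda>x. x) \<phi>)) (idem A)) (blk A (\<lambda>x. x) \<phi>) = blk A m m"
      unfolding m_def by (rule conj_formula[OF A Bp inj A]) blast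
    also have "\<dots> = blk A \<phi> \<phi>"
      by (rule blk_cong) (use sel_unique[OF dA nA, of _ \<phi>] in \<open>auto simp: m_def\<close>)
    also have "\<dots> = idem B" unfolding blk_same_idem \<phi>A ..
    finally show ?thesis .
  qed
  have UA: "\<Union>A = {1..n}" using partition_onD1[OF A] by simp
  have UB: "\<Union>B = {1..n}" using partition_onD1[OF B] by simp
  have c2: "pprod (pprod (pinv n (blk A (\<lambda>x. x) \<phi>)) (omg n)) (blk A (\<lambda>x. x) \<phi>) = omg n"
  proof -
    have "pprod (pprod (pinv n (blk A (\<lambda>x. x) \<phi>)) (omg n)) (blk A (\<lambda>x. x) \<phi>) = blk {{1..n}} m m"
      unfolding m_def omg_def by (rule conj_formula[OF A Bp inj omg_part[OF n1]]) (use UA in blast)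
    also have "\<dots> = idem (m ` {{1..n}})" unfolding blk_same_idem ..
    also have "m {1..n} = {1..n}"
    proof -
      have "{\<phi> i | i. i\<in>A \<and> i \<subseteq> {1..n}} = \<phi> ` A" using UA by blast
      then show ?thesis unfolding m_def using UB \<phi>A by simp
    qed
    then have "idem (m ` {{1..n}}) = omg n" unfolding omg_def by simp
    finally show ?thesis .
  qed
  show ?thesis using LN[OF inL sI] unfolding c1 c2 .
qed

lemma Bmerge:
  assumes inL: "(idem A, omg n) \<in> L" and A: "partition_on {1..n} A" and c: "card A \<ge> 2"
  shows "\<exists>A'. partition_on {1..n} A' \<and> card A' = card A - 1 \<and> (idem A', omg n) \<in> L"
proof -
  have fA: "finite A" using part_fin[OF A] .
  obtain E1 E2 where E: "E1 \<in> A" "E2 \<in> A" "E1 \<noteq> E2"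
  proof -
    have "A \<noteq> {}" using c by auto
    then obtain E1 where E1: "E1 \<in> A" by blast
    have "card (A - {E1}) \<ge> 1" using c E1 fA by simp
    then have "card (A - {E1}) \<noteq> 0" by linarith
    then have "A - {E1} \<noteq> {}" by (metis card.empty)
    then obtain E2 where "E2 \<in> A" "E2 \<noteq> E1" by blast
    then show ?thesis using that E1 by blast
  qed
  have n1': "E1 \<noteq> {}" "E2 \<noteq> {}" using part_ne_id[OF A] E by auto
  have dA: "disjf A (\<lambda>x. x)" using part_disjf_id[OF A] .
  have E12: "E1 \<inter> E2 = {}" using dA E unfolding disjf_def by blast
  define A' where "A' = insert (E1 \<union> E2) (A - {E1, E2})"
  have dd: "\<And>a b. a \<in> A \<Longrightarrow> b \<in> A \<Longrightarrow> a \<noteq> b \<Longrightarrow> a \<inter> b = {}"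
    using dA unfolding disjf_def by blast
  have notin: "E1 \<union> E2 \<notin> A - {E1, E2}"
  proof
    assume h: "E1 \<union> E2 \<in> A - {E1, E2}"
    have m1: "E1 \<union> E2 \<in> A" using h by (rule DiffD1)
    have m2: "E1 \<union> E2 \<notin> {E1, E2}" using h unfolding Diff_iff by (rule conjunct2)
    have m3: "E1 \<union> E2 \<noteq> E1"
    proof
      assume "E1 \<union> E2 = E1"
      then show False using m2 by (metis insertI1)
    qed
    have "(E1 \<union> E2) \<inter> E1 = {}" by (rule dd[OF m1 E(1) m3])
    then have "E1 = {}" by blast
    then show False using n1' by simp
  qed
  have UA: "\<Union>A = {1..n}" using partition_onD1[OF A] by simp
  have A'p: "partition_on {1..n} A'"
  proof (rule partition_onI)
    have "\<Union>A' = (E1 \<union> E2) \<union> \<Union>(A - {E1, E2})" unfolding A'_def by simp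
    also have "\<dots> = \<Union>A" using E by auto
    finally show "\<Union>A' = {1..n}" using UA by simp
  next
    fix p q assume pq: "p \<in> A'" "q \<in> A'" "p \<noteq> q"
    show "disjnt p q"
    proof (cases "p = E1 \<union> E2")
      case True
      then have q: "q \<in> A" "q \<noteq> E1" "q \<noteq> E2" using pq unfolding A'_def by auto
      have "q \<inter> E1 = {}" by (rule dd[OF q(1) E(1) q(2)])
      moreover have "q \<inter> E2 = {}" by (rule dd[OF q(1) E(2) q(3)])
      ultimately show ?thesis using True unfolding disjnt_def by auto
    next
      case False
      then have p: "p \<in> A" "p \<noteq> E1" "p \<noteq> E2" using pq unfolding A'_def by auto
      show ?thesis
      proof (cases "q = E1 \<union> E2")
        case True
        have "p \<inter> E1 = {}" by (rule dd[OF p(1) E(1) p(2)])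
        moreover have "p \<inter> E2 = {}" by (rule dd[OF p(1) E(2) p(3)])
        ultimately show ?thesis using True unfolding disjnt_def by auto
      next
        case False
        then have "q \<in> A" using pq unfolding A'_def by auto
        then have "p \<inter> q = {}" by (rule dd[OF p(1) _ pq(3)])
        then show ?thesis unfolding disjnt_def .
      qed
    qed
  next
    have "{} \<notin> A" using partition_onD3[OF A] .
    then show "{} \<notin> A'" unfolding A'_def using n1' by auto
  qed
  have cA': "card A' = card A - 1"
  proof -
    have "card (A - {E1, E2}) = card A - 2"
      using card_Diff_subset[of "{E1,E2}" A] E fA by simp
    then show ?thesis unfolding A'_def using card_insert_disjoint[OF _ notin] fA c by simp
  qed
  have rAA': "refn A A'"
    unfolding refn_def
  proof
    fix E assume E': "E \<in> A"
    show "\<exists>F\<in>A'. E \<subseteq> F"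
    proof (cases "E = E1 \<or> E = E2")
      case True
      then have "E \<subseteq> E1 \<union> E2" by blast
      moreover have "E1 \<union> E2 \<in> A'" unfolding A'_def by simp
      ultimately show ?thesis by blast
    next
      case False
      then have "E \<in> A'" unfolding A'_def using E' by simp
      then show ?thesis by blast
    qed
  qed
  have gE: "idem A' \<in> En n" by (rule idem_En[OF A'p])
  have "(pprod (idem A) (idem A'), pprod (omg n) (idem A')) \<in> L" by (rule LR[OF inL gE])
  then have "(idem A', omg n) \<in> L" unfolding idem_mult_ref[OF A A'p rAA'] omg_mult[OF n1 A'p] .
  then show ?thesis using A'p cA' by blast
qed

lemma Bdown:
  assumes e: "e \<in> En n" and inL: "(e, omg n) \<in> L" and f: "f \<in> En n" and r: "rank f \<le> rank e"
  shows "(f, omg n) \<in> L"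
proof -
  obtain A where A: "partition_on {1..n} A" and eA: "e = idem A" using En_idem[OF e] by blast
  obtain B where B: "partition_on {1..n} B" and fB: "f = idem B" using En_idem[OF f] by blast
  have inA: "(idem A, omg n) \<in> L" using inL eA by simp
  have cBA: "card B \<le> card A" using r eA fB rank_idem by simp
  have gen: "d < card A \<longrightarrow> (\<exists>A'. partition_on {1..n} A' \<and> card A' = card A - d \<and> (idem A', omg n) \<in> L)" for d
  proof (induction d)
    case 0 then show ?case using A inA by auto
  next
    case (Suc d)
    show ?case
    proof
      assume "Suc d < card A"
      then obtain A' where A': "partition_on {1..n} A'" "card A' = card A - d" "(idem A', omg n) \<in> L"
        using Suc by auto
      have "card A' \<ge> 2" using A'(2) \<open>Suc d < card A\<close> by simp
      then obtain A'' where "partition_on {1..n} A''" "card A'' = card A' - 1" "(idem A'', omg n) \<in> L"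
        using Bmerge[OF A'(3) A'(1)] by blast
      then show "\<exists>A'. partition_on {1..n} A' \<and> card A' = card A - Suc d \<and> (idem A', omg n) \<in> L"
        using A'(2) by auto
    qed
  qed
  have "card B \<ge> 1" using card_part_ge1[OF n1 B] .
  then have "card A - card B < card A" using cBA by simp
  then obtain A' where A': "partition_on {1..n} A'" "card A' = card A - (card A - card B)" "(idem A', omg n) \<in> L"
    using gen by blast
  have "card B = card A'" using A'(2) cBA by simp
  then have "(idem B, omg n) \<in> L" using Bsame[OF A'(3) A'(1) B] by simp
  then show ?thesis using fB by simp
qed

end

lemma En_finite: "finite (En n)"
proof -
  have "finite (carrierX n)" unfolding carrierX_def by simp
  then have "finite {P. partition_on (carrierX n) P}" by (rule finitely_many_partition_on)
  moreover have "En n \<subseteq> {P. partition_on (carrierX n) P}" unfolding En_def Istar_def by blast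
  ultimately show ?thesis by (rule finite_subset[rotated])
qed

theorem mainTheorem20:
  fixes n :: nat and L :: "(bpart \<times> bpart) set"
  assumes "n \<ge> 1" and "normal_congruence n L"
  shows "\<exists>k\<in>{1..n}. L = Id_on (En n) \<union> (Enk n k \<times> Enk n k)"
proof -
  note n1 = assms(1) and nc = assms(2)
  define C where "C = {e \<in> En n. (e, omg n) \<in> L}"
  have oE: "omg n \<in> En n" using omg_En[OF n1] .
  have oC: "omg n \<in> C" unfolding C_def using oE Lrefl[OF n1 nc oE] by blast
  have fC: "finite C" unfolding C_def using En_finite by simp
  define k where "k = Max (rank ` C)"
  have "k \<in> rank ` C" unfolding k_def using fC oC by (intro Max_in) auto
  then obtain e0 where e0: "e0 \<in> C" "rank e0 = k" by blast
  have e0E: "e0 \<in> En n" using e0 unfolding C_def by blast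
  obtain P where P: "partition_on {1..n} P" "e0 = idem P" using En_idem[OF e0E] by blast
  have k1: "k \<in> {1..n}" using card_part_ge1[OF n1 P(1)] card_part_le[OF P(1)] e0(2) P(2) rank_idem by auto
  have CE: "Enk n k = C"
  proof
    show "Enk n k \<subseteq> C"
    proof
      fix e assume "e \<in> Enk n k"
      then have e: "e \<in> En n" "rank e \<le> rank e0" unfolding Enk_def using e0 by auto
      have "(e0, omg n) \<in> L" using e0 unfolding C_def by blast
      then have "(e, omg n) \<in> L" using Bdown[OF n1 nc e0E _ e(1) e(2)] by blast
      then show "e \<in> C" unfolding C_def using e by blast
    qed
    show "C \<subseteq> Enk n k"
    proof
      fix e assume e: "e \<in> C"
      then have "rank e \<le> k" unfolding k_def using fC by (intro Max_ge) auto
      then show "e \<in> Enk n k" using e unfolding C_def Enk_def by blast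
    qed
  qed
  have "L = Id_on (En n) \<union> (C \<times> C)"
  proof
    show "L \<subseteq> Id_on (En n) \<union> (C \<times> C)"
    proof
      fix p assume p: "p \<in> L"
      obtain e f where ef: "p = (e,f)" by (cases p)
      have efL: "(e,f) \<in> L" using p ef by simp
      have eE: "e \<in> En n" and fE: "f \<in> En n" using Lsub[OF n1 nc efL] by auto
      show "p \<in> Id_on (En n) \<union> (C \<times> C)"
      proof (cases "e = f")
        case True then show ?thesis using ef eE by auto
      next
        case False
        have "(e, omg n) \<in> L" using Astep[OF n1 nc efL False] .
        moreover have "(f, omg n) \<in> L" using Astep[OF n1 nc Lsym[OF n1 nc efL]] False by metis
        ultimately show ?thesis using ef eE fE unfolding C_def by auto
      qed
    qed
    show "Id_on (En n) \<union> (C \<times> C) \<subseteq> L"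
    proof
      fix p assume "p \<in> Id_on (En n) \<union> (C \<times> C)"
      then show "p \<in> L"
      proof
        assume "p \<in> Id_on (En n)"
        then show ?thesis using Lrefl[OF n1 nc] by (auto simp: Id_on_def)
      next
        assume "p \<in> C \<times> C"
        then obtain e f where "p = (e,f)" "(e, omg n) \<in> L" "(f, omg n) \<in> L" unfolding C_def by auto
        then show ?thesis using Ltrans[OF n1 nc _ Lsym[OF n1 nc]] by blast
      qed
    qed
  qed
  then show ?thesis using k1 CE by blast
qed


end
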